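(* Let $G$ be a graph with line graph $L_G$. Then $$\mathcal E(L_G)\le 4\,\nu^-(L_G).$$ Equality holds if and only if $G$ consists of connected components $G_i=(V_i,E_i)$ with $n_i=|V_i|$ and $|E_i|\ge2$, together with possibly some isolated vertices and components that are single edges, such that each non-bipartite such component $G_i$ satisfies $|E_i|>|V_i|$ and $q_{n_i}(G_i)\ge 2$, and each bipartite such component $G_i$ is either a $4$-cycle or satisfies $|E_i|>|V_i|$ and $q_{n_i-1}(G_i)\ge2$.
   Context: All graphs are finite and simple. The line graph $L_G$ has the edges of $G$ as vertices, two adjacent iff they share an endpoint. $\mathcal E(H)$ is the sum of absolute values of the adjacency eigenvalues of $H$, and $\nu^-(H)$ the number of negative adjacency eigenvalues. For a graph $H$ on $p$ vertices, $q_1(H)\ge\cdots\ge q_p(H)$ are the eigenvalues of the signless Laplacian $Q(H)=D(H)+\mathcal A(H)$, where $D(H)$ is the diagonal degree matrix and $\mathcal A(H)$ the adjacency matrix. *)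

theory Defs
  imports "Jordan_Normal_Form.Matrix" "Jordan_Normal_Form.Char_Poly" "HOL-Library.Multiset"
begin

definition simple_graph :: "'a set \<Rightarrow> 'a set set \<Rightarrow> bool" where
  "simple_graph V E \<longleftrightarrow> finite V \<and>
     (\<forall>e\<in>E. \<exists>u v. u \<noteq> v \<and> u \<in> V \<and> v \<in> V \<and> e = {u, v})"

definition line_graph_edges :: "'a set set \<Rightarrow> 'a set set set" where
  "line_graph_edges E = {{e, f} | e f. e \<in> E \<and> f \<in> E \<and> e \<noteq> f \<and> e \<inter> f \<noteq> {}}"

text \<open>An (arbitrary, fixed) enumeration of a finite set; spectra do not depend on it.\<close>
definition enum_set :: "'a set \<Rightarrow> 'a list" where
  "enum_set S = (SOME xs. distinct xs \<and> set xs = S)"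

definition adj_matrix :: "'a set \<Rightarrow> 'a set set \<Rightarrow> real mat" where
  "adj_matrix V E = (let xs = enum_set V in
     mat (length xs) (length xs) (\<lambda>(i, j). if {xs ! i, xs ! j} \<in> E then 1 else 0))"

definition degree :: "'a set set \<Rightarrow> 'a \<Rightarrow> nat" where
  "degree E v = card {e \<in> E. v \<in> e}"

definition signless_laplacian :: "'a set \<Rightarrow> 'a set set \<Rightarrow> real mat" where
  "signless_laplacian V E = (let xs = enum_set V in
     mat (length xs) (length xs) (\<lambda>(i, j).
        (if i = j then real (degree E (xs ! i)) else 0)
      + (if {xs ! i, xs ! j} \<in> E then 1 else 0)))"

definition eigenvalues :: "real mat \<Rightarrow> real multiset" where
  "eigenvalues A = proots (char_poly A)"

definition energy :: "'a set \<Rightarrow> 'a set set \<Rightarrow> real" where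
  "energy V E = (\<Sum>\<^sub># (image_mset abs (eigenvalues (adj_matrix V E))))"

definition neg_inertia :: "'a set \<Rightarrow> 'a set set \<Rightarrow> nat" where
  "neg_inertia V E = size (filter_mset (\<lambda>x. x < 0) (eigenvalues (adj_matrix V E)))"

text \<open>q k V E = k-th largest signless Laplacian eigenvalue (1-based): q_1 \<ge> ... \<ge> q_p.\<close>
definition q_eig :: "nat \<Rightarrow> 'a set \<Rightarrow> 'a set set \<Rightarrow> real" where
  "q_eig k V E = rev (sorted_list_of_multiset (eigenvalues (signless_laplacian V E))) ! (k - 1)"

definition adjacent :: "'a set set \<Rightarrow> 'a \<Rightarrow> 'a \<Rightarrow> bool" where
  "adjacent E u v \<longleftrightarrow> {u, v} \<in> E"

definition is_component :: "'a set \<Rightarrow> 'a set set \<Rightarrow> 'a set \<Rightarrow> bool" where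
  "is_component V E C \<longleftrightarrow> (\<exists>v\<in>V. C = {u \<in> V. (adjacent E)\<^sup>*\<^sup>* v u})"

definition induced_edges :: "'a set set \<Rightarrow> 'a set \<Rightarrow> 'a set set" where
  "induced_edges E C = {e \<in> E. e \<subseteq> C}"

definition bipartite :: "'a set \<Rightarrow> 'a set set \<Rightarrow> bool" where
  "bipartite V E \<longleftrightarrow> (\<exists>f :: 'a \<Rightarrow> bool. \<forall>u\<in>V. \<forall>v\<in>V. {u, v} \<in> E \<longrightarrow> f u \<noteq> f v)"

definition is_C4 :: "'a set \<Rightarrow> 'a set set \<Rightarrow> bool" where
  "is_C4 V E \<longleftrightarrow> (\<exists>a b c d. distinct [a, b, c, d] \<and> V = {a, b, c, d} \<and>
      E = {{a, b}, {b, c}, {c, d}, {d, a}})"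

end

theory Submission
  imports Defs "Jordan_Normal_Form.Schur_Decomposition"
begin
lemma sym_real_root_real:
  fixes A :: "real mat"
  assumes A: "A \<in> carrier_mat n n" and sym: "\<And>i j. i<n \<Longrightarrow> j<n \<Longrightarrow> A$$(i,j) = A$$(j,i)"
    and root: "poly (char_poly (of_real_hom.mat_hom A)) c = 0"
  shows "Im c = 0"
proof -
  let ?Ac = "of_real_hom.mat_hom A :: complex mat"
  have Ac: "?Ac \<in> carrier_mat n n" using A by auto
  have "eigenvalue ?Ac c" using eigenvalue_root_char_poly[OF Ac] root by simp
  then obtain v where ev: "eigenvector ?Ac v c" by (auto simp: eigenvalue_def)
  have v: "v \<in> carrier_vec n" and v0: "v \<noteq> 0\<^sub>v n" and eq: "?Ac *\<^sub>v v = c \<cdot>\<^sub>v v"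
    using ev A unfolding eigenvector_def by auto
  define s where "s = (\<Sum>i<n. \<Sum>j<n. cnj (v$i) * complex_of_real (A$$(i,j)) * v$j)"
  define N where "N = (\<Sum>i<n. cnj (v$i) * v$i)"
  have row: "\<And>i. i < n \<Longrightarrow> (\<Sum>j<n. complex_of_real (A$$(i,j)) * v$j) = c * v$i"
  proof -
    fix i assume i: "i < n"
    have "(?Ac *\<^sub>v v) $ i = (c \<cdot>\<^sub>v v) $ i" using eq by simp
    moreover have "(?Ac *\<^sub>v v) $ i = (\<Sum>j<n. complex_of_real (A$$(i,j)) * v$j)"
      using i A v by (auto simp: mult_mat_vec_def scalar_prod_def row_def lessThan_atLeast0 intro!: sum.cong)
    moreover have "(c \<cdot>\<^sub>v v) $ i = c * v$i" using i v by auto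
    ultimately show "(\<Sum>j<n. complex_of_real (A$$(i,j)) * v$j) = c * v$i" by simp
  qed
  have "s = (\<Sum>i<n. cnj (v$i) * (\<Sum>j<n. complex_of_real (A$$(i,j)) * v$j))"
    by (simp add: s_def sum_distrib_left mult.assoc)
  also have "\<dots> = (\<Sum>i<n. c * (cnj (v$i) * v$i))"
    by (intro sum.cong refl) (simp add: row)
  also have "\<dots> = c * N" by (simp add: N_def sum_distrib_left)
  finally have sN: "s = c * N" .
  have "cnj s = (\<Sum>i<n. \<Sum>j<n. v$i * complex_of_real (A$$(i,j)) * cnj (v$j))"
    unfolding s_def by (simp add: mult.commute)
  also have "\<dots> = (\<Sum>j<n. \<Sum>i<n. v$i * complex_of_real (A$$(i,j)) * cnj (v$j))"
    by (rule sum.swap)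
  also have "\<dots> = s" unfolding s_def
    by (intro sum.cong refl, simp add: sym mult.commute mult.left_commute)
  finally have sreal: "cnj s = s" .
  have Nreal: "N = complex_of_real (\<Sum>i<n. (cmod (v$i))^2)"
    unfolding N_def of_real_sum by (intro sum.cong refl) (simp add: complex_norm_square mult.commute del: of_real_power)
  have "\<exists>i<n. v$i \<noteq> 0" using v v0 by (metis eq_vecI carrier_vecD index_zero_vec(1) index_zero_vec(2))
  then obtain i where i: "i<n" "v$i \<noteq> 0" by auto
  have "(cmod (v$i))^2 > 0" using i by simp
  moreover have "(cmod (v$i))^2 \<le> (\<Sum>i<n. (cmod (v$i))^2)"
    by (rule member_le_sum, insert i, auto)
  ultimately have Npos: "(\<Sum>i<n. (cmod (v$i))^2) > 0" by linarith
  have "Im (cnj s) = Im s" using sreal by simp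
  hence Ims: "Im s = 0" by simp
  define r where "r = (\<Sum>i<n. (cmod (v$i))^2)"
  have N: "N = complex_of_real r" using Nreal unfolding r_def .
  have "r \<noteq> 0" using Npos unfolding r_def by simp
  hence "complex_of_real r \<noteq> 0" by simp
  hence "c = s / complex_of_real r" using sN N by (simp add: field_simps)
  then show ?thesis using Ims by simp
qed

interpretation of_real_poly_hom: map_poly_idom_hom "of_real :: real \<Rightarrow> complex" ..

lemma map_poly_of_real_linprod:
  "map_poly (of_real :: real \<Rightarrow> complex) (\<Prod>a\<leftarrow>as. [:-a,1:]) = (\<Prod>a\<leftarrow>as. [:-of_real a,1:])"
proof (induct as)
  case (Cons a as)
  have "map_poly (of_real :: real \<Rightarrow> complex) (\<Prod>a\<leftarrow>a#as. [:-a,1:]) = map_poly of_real ([:-a,1:] * (\<Prod>a\<leftarrow>as. [:-a,1:]))"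
    by (simp only: prod_list.Cons list.map)
  also have "\<dots> = map_poly of_real [:-a,1:] * map_poly of_real (\<Prod>a\<leftarrow>as. [:-a,1:])"
    by (rule of_real_poly_hom.hom_mult)
  finally show ?case using Cons by simp
qed simp

lemma sym_real_factor:
  fixes A :: "real mat"
  assumes A: "A \<in> carrier_mat n n" and sym: "\<And>i j. i<n \<Longrightarrow> j<n \<Longrightarrow> A$$(i,j) = A$$(j,i)"
  shows "\<exists>as. char_poly A = (\<Prod>a\<leftarrow>as. [:-a,1:]) \<and> length as = n"
proof -
  let ?Ac = "of_real_hom.mat_hom A :: complex mat"
  have Ac: "?Ac \<in> carrier_mat n n" using A by auto
  obtain cs where cs: "char_poly ?Ac = (\<Prod>c\<leftarrow>cs. [:-c,1:])" "length cs = n"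
    using char_poly_factorized[OF Ac] by auto
  have re: "c = of_real (Re c)" if c: "c \<in> set cs" for c
  proof -
    have "poly (char_poly ?Ac) c = 0" unfolding cs(1) using c
      by (simp add: poly_prod_list prod_list_zero_iff)
    hence "Im c = 0" using sym_real_root_real[OF A sym, of c] by blast
    thus ?thesis by (simp add: complex_eq_iff)
  qed
  define as where "as = map Re cs"
  have "map_poly (of_real :: real \<Rightarrow> complex) (\<Prod>a\<leftarrow>as. [:-a,1:]) = (\<Prod>a\<leftarrow>as. [:-of_real a,1:])"
    by (rule map_poly_of_real_linprod)
  also have "\<dots> = (\<Prod>c\<leftarrow>cs. [:-c,1:])"
    unfolding as_def map_map o_def
  proof (rule arg_cong[where f=prod_list], rule map_cong[OF refl])
    fix c assume "c \<in> set cs"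
    from re[OF this] show "[:- complex_of_real (Re c), 1:] = [:- c, 1:]" by simp
  qed
  also have "\<dots> = char_poly ?Ac" using cs(1) by simp
  also have "\<dots> = map_poly of_real (char_poly A)" by (rule of_real_hom.char_poly_hom[OF A])
  finally have eq: "map_poly (of_real :: real \<Rightarrow> complex) (\<Prod>a\<leftarrow>as. [:-a,1:]) = map_poly of_real (char_poly A)" .
  have "char_poly A = (\<Prod>a\<leftarrow>as. [:-a,1:])"
  proof (rule poly_eqI)
    fix i
    have "coeff (map_poly (of_real :: real \<Rightarrow> complex) (\<Prod>a\<leftarrow>as. [:-a,1:])) i = coeff (map_poly of_real (char_poly A)) i"
      using eq by simp
    thus "coeff (char_poly A) i = coeff (\<Prod>a\<leftarrow>as. [:-a,1:]) i" by (simp add: coeff_map_poly)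
  qed
  moreover have "length as = n" using cs(2) as_def by simp
  ultimately show ?thesis by blast
qed

lemma proots_linprod: "proots (\<Prod>a\<leftarrow>as. [:-a,1::real:]) = mset as"
proof (induct as)
  case (Cons a as)
  have nz: "(\<Prod>a\<leftarrow>as. [:-a,1::real:]) \<noteq> 0" by (auto simp: prod_list_zero_iff)
  have l: "proots [:- a, 1::real:] = {#a#}" using proots_linear_factor[of "-a"] by simp
  have "proots (\<Prod>a\<leftarrow>a#as. [:-a,1::real:]) = proots ([:-a,1:] * (\<Prod>a\<leftarrow>as. [:-a,1::real:]))" by simp
  also have "\<dots> = proots [:-a,1:] + proots (\<Prod>a\<leftarrow>as. [:-a,1::real:])"
    by (rule proots_mult, simp, rule nz)
  finally show ?case using Cons l by simp
qed simp

lemma sym_eigenvalues: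
  fixes A :: "real mat"
  assumes A: "A \<in> carrier_mat n n" and sym: "\<And>i j. i<n \<Longrightarrow> j<n \<Longrightarrow> A$$(i,j) = A$$(j,i)"
  shows "\<exists>as. char_poly A = (\<Prod>a\<leftarrow>as. [:-a,1:]) \<and> length as = n \<and> eigenvalues A = mset as"
  using sym_real_factor[OF A sym] proots_linprod unfolding eigenvalues_def by metis

definition tr :: "nat \<Rightarrow> real mat \<Rightarrow> real" where
  "tr n M = (\<Sum>i<n. M$$(i,i))"

lemma tr_comm:
  assumes X: "X \<in> carrier_mat n n" and Y: "Y \<in> carrier_mat n n"
  shows "tr n (X * Y) = tr n (Y * X)"
proof -
  have "tr n (X * Y) = (\<Sum>i<n. \<Sum>k<n. X$$(i,k) * Y$$(k,i))"
    unfolding tr_def using X Y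
    by (intro sum.cong refl) (auto simp: scalar_prod_def lessThan_atLeast0 intro!: sum.cong)
  also have "\<dots> = (\<Sum>k<n. \<Sum>i<n. Y$$(k,i) * X$$(i,k))"
    by (subst sum.swap) (simp add: mult.commute)
  also have "\<dots> = tr n (Y * X)"
    unfolding tr_def using X Y
    by (intro sum.cong refl) (auto simp: scalar_prod_def lessThan_atLeast0 intro!: sum.cong)
  finally show ?thesis .
qed

lemma tr_sim:
  assumes "similar_mat_wit A B P Q" and A: "A \<in> carrier_mat n n"
  shows "tr n A = tr n B" "tr n (A * A) = tr n (B * B)"
proof -
  from assms have B: "B \<in> carrier_mat n n" and P: "P \<in> carrier_mat n n" and Q: "Q \<in> carrier_mat n n"
    and QP: "Q * P = 1\<^sub>m n" and AA: "A = P * B * Q"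
    unfolding similar_mat_wit_def Let_def by auto
  have "tr n A = tr n (P * (B * Q))" using AA P B Q by (simp add: assoc_mult_mat[of P n n B n Q n])
  also have "\<dots> = tr n ((B * Q) * P)" by (rule tr_comm, insert P B Q, auto)
  also have "(B * Q) * P = B * (Q * P)" using P B Q by (simp add: assoc_mult_mat[of B n n Q n P n])
  also have "\<dots> = B" using QP B by simp
  finally show "tr n A = tr n B" .
  have "A * A = P * (B * Q) * (P * (B * Q))" using AA P B Q by (simp add: assoc_mult_mat[of P n n B n Q n])
  also have "\<dots> = P * ((B * Q) * (P * (B * Q)))" using P B Q by (simp add: assoc_mult_mat[of P n n _ n _ n])
  also have "(B * Q) * (P * (B * Q)) = B * (Q * P) * (B * Q)"
    using P B Q by (simp add: assoc_mult_mat[of _ n n _ n _ n])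
  also have "\<dots> = B * (B * Q)" using QP B by simp
  finally have AA2: "A * A = P * (B * (B * Q))" .
  have "tr n (A * A) = tr n ((B * (B * Q)) * P)" unfolding AA2 by (rule tr_comm, insert P B Q, auto)
  also have "(B * (B * Q)) * P = (B * B) * (Q * P)"
    using P B Q by (simp add: assoc_mult_mat[of _ n n _ n _ n])
  also have "\<dots> = B * B" using QP B by simp
  finally show "tr n (A * A) = tr n (B * B)" .
qed

lemma tr_square:
  assumes A: "A \<in> carrier_mat n n"
  shows "tr n (A * A) = (\<Sum>i<n. \<Sum>j<n. A$$(i,j) * A$$(j,i))"
  unfolding tr_def using A
  by (intro sum.cong refl) (auto simp: scalar_prod_def lessThan_atLeast0 intro!: sum.cong)

lemma tr_upper:
  assumes B: "B \<in> carrier_mat n n" and ut: "upper_triangular B"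
  shows "tr n B = sum_list (diag_mat B)" "tr n (B * B) = sum_list (map (\<lambda>a. a^2) (diag_mat B))"
proof -
  show "tr n B = sum_list (diag_mat B)"
    using B unfolding tr_def diag_mat_def by (simp add: sum_list_sum_nth lessThan_atLeast0)
  have "tr n (B * B) = (\<Sum>i<n. \<Sum>k<n. B$$(i,k) * B$$(k,i))"
    unfolding tr_def using B
    by (intro sum.cong refl) (auto simp: scalar_prod_def lessThan_atLeast0 intro!: sum.cong)
  also have "\<dots> = (\<Sum>i<n. B$$(i,i)^2)"
  proof (intro sum.cong refl)
    fix i assume i: "i \<in> {..<n}"
    have "(\<Sum>k<n. B$$(i,k) * B$$(k,i)) = B$$(i,i) * B$$(i,i) + (\<Sum>k\<in>{..<n}-{i}. B$$(i,k) * B$$(k,i))"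
      using i by (simp add: sum.remove)
    also have "(\<Sum>k\<in>{..<n}-{i}. B$$(i,k) * B$$(k,i)) = 0"
    proof (rule sum.neutral, rule ballI)
      fix k assume "k \<in> {..<n}-{i}"
      hence k: "k < n" "k \<noteq> i" by auto
      show "B$$(i,k) * B$$(k,i) = 0"
      proof (cases "k < i")
        case True thus ?thesis using ut B i unfolding upper_triangular_def by auto
      next
        case False hence "i < k" using k by auto
        thus ?thesis using ut B k unfolding upper_triangular_def by auto
      qed
    qed
    finally show "(\<Sum>k<n. B$$(i,k) * B$$(k,i)) = B$$(i,i)^2" by (simp add: power2_eq_square)
  qed
  also have "\<dots> = sum_list (map (\<lambda>a. a^2) (diag_mat B))"
    using B unfolding diag_mat_def by (simp add: sum_list_sum_nth lessThan_atLeast0)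
  finally show "tr n (B * B) = sum_list (map (\<lambda>a. a^2) (diag_mat B))" .
qed

lemma factored_traces:
  fixes A :: "real mat"
  assumes A: "A \<in> carrier_mat n n" and cp: "char_poly A = (\<Prod>a\<leftarrow>as. [:-a,1:])"
  shows "sum_list as = (\<Sum>i<n. A$$(i,i))"
    "sum_list (map (\<lambda>a. a^2) as) = (\<Sum>i<n. \<Sum>j<n. A$$(i,j) * A$$(j,i))"
proof -
  obtain B P Q where sd: "schur_decomposition A as = (B,P,Q)" by (cases "schur_decomposition A as") auto
  from schur_decomposition[OF A cp sd] have sim: "similar_mat_wit A B P Q"
    and ut: "upper_triangular B" and dg: "diag_mat B = as" by auto
  have B: "B \<in> carrier_mat n n" using sim A unfolding similar_mat_wit_def Let_def by auto
  show "sum_list as = (\<Sum>i<n. A$$(i,i))"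
    using tr_sim(1)[OF sim A] tr_upper(1)[OF B ut] dg unfolding tr_def by simp
  show "sum_list (map (\<lambda>a. a^2) as) = (\<Sum>i<n. \<Sum>j<n. A$$(i,j) * A$$(j,i))"
    using tr_sim(2)[OF sim A] tr_upper(2)[OF B ut] dg tr_square[OF A] by simp
qed

definition qf :: "nat \<Rightarrow> real mat \<Rightarrow> (nat \<Rightarrow> real) \<Rightarrow> real" where
  "qf n A y = (\<Sum>i<n. \<Sum>j<n. y i * A$$(i,j) * y j)"

lemma eig_qf:
  assumes A: "A \<in> carrier_mat n n" and w: "w \<in> carrier_vec n" and ev: "A *\<^sub>v w = b \<cdot>\<^sub>v w"
  shows "qf n A (\<lambda>i. w$i) = b * (\<Sum>i<n. (w$i)^2)"
proof -
  have row: "(\<Sum>j<n. A$$(i,j) * w$j) = b * w$i" if i: "i < n" for i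
  proof -
    have "(A *\<^sub>v w) $ i = (b \<cdot>\<^sub>v w) $ i" using ev by simp
    moreover have "(A *\<^sub>v w) $ i = (\<Sum>j<n. A$$(i,j) * w$j)"
      using i A w by (auto simp: mult_mat_vec_def scalar_prod_def row_def lessThan_atLeast0 intro!: sum.cong)
    moreover have "(b \<cdot>\<^sub>v w) $ i = b * w$i" using i w by auto
    ultimately show ?thesis by simp
  qed
  have "qf n A (\<lambda>i. w$i) = (\<Sum>i<n. w$i * (\<Sum>j<n. A$$(i,j) * w$j))"
    unfolding qf_def by (simp add: sum_distrib_left mult.assoc)
  also have "\<dots> = (\<Sum>i<n. b * (w$i)^2)"
    by (intro sum.cong refl) (simp add: row power2_eq_square)
  finally show ?thesis by (simp add: sum_distrib_left)
qed

lemma insert_index_bij: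
  assumes i: "i < Suc m"
  shows "bij_betw (insert_index i) {..<m} ({..<Suc m} - {i})"
  unfolding bij_betw_def using insert_index_inj_on[of i] insert_index_image[OF i]
  by (simp add: lessThan_atLeast0)

lemma sum_drop_index:
  fixes g :: "nat \<Rightarrow> real"
  assumes i: "i < Suc m" and gi: "g i = 0"
  shows "(\<Sum>k<Suc m. g k) = (\<Sum>k<m. g (insert_index i k))"
proof -
  have "(\<Sum>k<Suc m. g k) = g i + (\<Sum>k\<in>{..<Suc m}-{i}. g k)" by (rule sum.remove) (use i in auto)
  also have "(\<Sum>k\<in>{..<Suc m}-{i}. g k) = (\<Sum>k<m. g (insert_index i k))"
    using sum.reindex_bij_betw[OF insert_index_bij[OF i], of g] by simp
  finally show ?thesis using gi by simp
qed

lemma md: "A \<in> carrier_mat (Suc m) (Suc m) \<Longrightarrow> k < m \<Longrightarrow> l < m \<Longrightarrow>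
  mat_delete A i i $$ (k,l) = A $$ (insert_index i k, insert_index i l)"
  by (simp add: mat_delete_def insert_index_def)

lemma del_qf:
  assumes A: "A \<in> carrier_mat (Suc m) (Suc m)" and i: "i < Suc m"
  shows "qf m (mat_delete A i i) w = qf (Suc m) A (\<lambda>k. if k = i then 0 else w (delete_index i k))"
proof -
  let ?y = "\<lambda>k. if k = i then 0 else w (delete_index i k)"
  have yi: "?y (insert_index i k) = w k" for k by simp
  have "qf (Suc m) A ?y = (\<Sum>k<m. \<Sum>l<Suc m. ?y (insert_index i k) * A$$(insert_index i k,l) * ?y l)"
    unfolding qf_def by (rule sum_drop_index[OF i], simp)
  also have "\<dots> = (\<Sum>k<m. \<Sum>l<m. ?y (insert_index i k) * A$$(insert_index i k,insert_index i l) * ?y (insert_index i l))"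
  proof (rule sum.cong[OF refl])
    fix k show "(\<Sum>l<Suc m. ?y (insert_index i k) * A$$(insert_index i k,l) * ?y l) =
      (\<Sum>l<m. ?y (insert_index i k) * A$$(insert_index i k,insert_index i l) * ?y (insert_index i l))"
      by (rule sum_drop_index[OF i]) simp
  qed
  also have "\<dots> = qf m (mat_delete A i i) w"
    unfolding qf_def using A
    by (intro sum.cong refl) (simp add: md)
  finally show ?thesis by simp
qed

lemma sym_delete:
  fixes A :: "real mat"
  assumes A: "A \<in> carrier_mat (Suc m) (Suc m)" and sym: "\<And>i j. i<Suc m \<Longrightarrow> j<Suc m \<Longrightarrow> A$$(i,j) = A$$(j,i)"
    and i: "i < Suc m"
  shows "mat_delete A i i \<in> carrier_mat m m"
    "\<And>k l. k<m \<Longrightarrow> l<m \<Longrightarrow> mat_delete A i i $$(k,l) = mat_delete A i i $$(l,k)"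
  using A sym by (auto simp: mat_delete_def)

lemma zero_mult_le1:
  fixes A :: "real mat"
  assumes A: "A \<in> carrier_mat n n" and sym: "\<And>i j. i<n \<Longrightarrow> j<n \<Longrightarrow> A$$(i,j) = A$$(j,i)"
    and psd: "\<And>y. qf n A y \<ge> 0"
    and i0: "i0 < n"
    and pd: "\<And>y. y i0 = 0 \<Longrightarrow> qf n A y = 0 \<Longrightarrow> \<forall>k<n. y k = 0"
  shows "count (eigenvalues A) 0 \<le> 1"
proof (rule ccontr)
  assume "\<not> ?thesis"
  hence c2: "count (eigenvalues A) 0 \<ge> 2" by simp
  obtain m where n: "n = Suc m" using i0 by (cases n) auto
  let ?p = "char_poly A"
  have deg: "Polynomial.degree ?p = n" "monic ?p" using degree_monic_char_poly[OF A] by auto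
  hence p0: "?p \<noteq> 0" by auto
  have ord: "Polynomial.order 0 ?p \<ge> 2" using c2 count_proots[OF p0] unfolding eigenvalues_def by simp
  hence "poly ?p 0 = 0" using order_root[of ?p 0] by auto
  from order_pderiv[OF p0 this] ord have "Polynomial.order 0 (pderiv ?p) \<noteq> 0" by simp
  hence "poly (pderiv ?p) 0 = 0" using order_root[of "pderiv ?p" 0] by auto
  hence sum0: "(\<Sum>i<n. poly (char_poly (mat_delete A i i)) 0) = 0"
    unfolding pderiv_char_poly[OF A] poly_sum by simp
  define P where "P i = poly (char_poly (mat_delete A i i)) 0 * (-1)^m" for i
  have Pge: "P i \<ge> 0 \<and> (i = i0 \<longrightarrow> P i > 0)" if i: "i < n" for i
  proof -
    let ?M = "mat_delete A i i"
    have M: "?M \<in> carrier_mat m m" and Msym: "\<And>k l. k<m \<Longrightarrow> l<m \<Longrightarrow> ?M $$(k,l) = ?M $$(l,k)"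
      using sym_delete[of A m i] A sym i n by auto
    obtain bs where bs: "char_poly ?M = (\<Prod>a\<leftarrow>bs. [:-a,1:])" "length bs = m"
      using sym_real_factor[OF M Msym] by auto
    have bge: "b \<ge> 0 \<and> (i = i0 \<longrightarrow> b > 0)" if b: "b \<in> set bs" for b
    proof -
      have "poly (char_poly ?M) b = 0" unfolding bs(1) using b
        by (simp add: poly_prod_list prod_list_zero_iff)
      hence "eigenvalue ?M b" using eigenvalue_root_char_poly[OF M] by simp
      then obtain w where "eigenvector ?M w b" by (auto simp: eigenvalue_def)
      hence w: "w \<in> carrier_vec m" and w0: "w \<noteq> 0\<^sub>v m" and ev: "?M *\<^sub>v w = b \<cdot>\<^sub>v w"
        using M unfolding eigenvector_def by auto
      have qfw: "qf m ?M (\<lambda>k. w$k) = b * (\<Sum>k<m. (w$k)^2)" by (rule eig_qf[OF M w ev])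
      let ?y = "\<lambda>k. if k = i then 0 else w $ (delete_index i k)"
      have qfy: "qf m ?M (\<lambda>k. w$k) = qf n A ?y" using del_qf[of A m i "\<lambda>k. w$k"] A i n by simp
      obtain k where k: "k < m" "w$k \<noteq> 0" using w w0
        by (metis eq_vecI carrier_vecD index_zero_vec(1) index_zero_vec(2))
      have "(w$k)^2 > 0" using k by simp
      moreover have "(w$k)^2 \<le> (\<Sum>k<m. (w$k)^2)" by (rule member_le_sum, insert k, auto)
      ultimately have N: "(\<Sum>k<m. (w$k)^2) > 0" by linarith
      have "b * (\<Sum>k<m. (w$k)^2) \<ge> 0" using psd[of ?y] qfw qfy by simp
      hence b0: "b \<ge> 0" using N by (simp add: zero_le_mult_iff)
      have "b > 0" if ii: "i = i0"
      proof (rule ccontr)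
        assume "\<not> b > 0"
        hence "b = 0" using b0 by simp
        hence "qf n A ?y = 0" using qfw qfy by simp
        moreover have "?y i0 = 0" using ii by simp
        ultimately have "\<forall>k<n. ?y k = 0" by (intro pd[of ?y])
        moreover have "insert_index i k < n" using k n by (simp add: insert_index_def)
        ultimately have "?y (insert_index i k) = 0" by blast
        thus False using k by simp
      qed
      thus ?thesis using b0 by simp
    qed
    have "poly (char_poly ?M) 0 = prod_list (map (\<lambda>a. - a) bs)"
      unfolding bs(1) by (induct bs) auto
    also have "\<dots> = (-1)^m * prod_list bs" using bs(2)
    proof (induct bs arbitrary: m)
      case (Cons a bs) thus ?case by (cases m) auto
    qed simp
    finally have "P i = (-1)^m * (-1)^m * prod_list bs" unfolding P_def by simp
    also have "(-1)^m * (-1)^m = (1::real)" by (simp flip: power_add add: power_mult[symmetric] mult_2[symmetric])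
    finally have "P i = prod_list bs" by simp
    moreover have "prod_list bs \<ge> 0" using bge by (intro prod_list_nonneg) auto
    moreover have "i = i0 \<longrightarrow> prod_list bs > 0" using bge
    proof (induct bs)
      case (Cons a bs) thus ?case by auto
    qed simp
    ultimately show ?thesis by auto
  qed
  have "(\<Sum>i<n. P i) = (-1)^m * (\<Sum>i<n. poly (char_poly (mat_delete A i i)) 0)"
    unfolding P_def by (simp add: sum_distrib_left mult.commute)
  also have "\<dots> = 0" using sum0 by simp
  finally have s0: "(\<Sum>i<n. P i) = 0" .
  have "(\<Sum>i<n. P i) = P i0 + (\<Sum>i\<in>{..<n}-{i0}. P i)" by (rule sum.remove) (use i0 in auto)
  moreover have "(\<Sum>i\<in>{..<n}-{i0}. P i) \<ge> 0" using Pge by (intro sum_nonneg) auto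
  moreover have "P i0 > 0" using Pge i0 by auto
  ultimately show False using s0 by linarith
qed

definition smat :: "'a set \<Rightarrow> ('a \<Rightarrow> 'a \<Rightarrow> real) \<Rightarrow> real mat" where
  "smat S f = (let xs = enum_set S in mat (length xs) (length xs) (\<lambda>(i,j). f (xs!i) (xs!j)))"

lemma enum_set: assumes "finite S"
  shows "distinct (enum_set S)" "set (enum_set S) = S" "length (enum_set S) = card S"
proof -
  have "\<exists>xs. distinct xs \<and> set xs = S" using finite_distinct_list[OF assms] by auto
  hence *: "distinct (enum_set S) \<and> set (enum_set S) = S"
    unfolding enum_set_def by (rule someI_ex)
  thus "distinct (enum_set S)" "set (enum_set S) = S" by auto
  thus "length (enum_set S) = card S" using distinct_card by metis
qed

lemma enum_sum:
  assumes S: "finite S"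
  shows "(\<Sum>i<card S. g (enum_set S ! i)) = (\<Sum>v\<in>S. g v)"
proof -
  have "bij_betw ((!) (enum_set S)) {..<card S} S"
    using enum_set[OF S] by (intro bij_betw_nth) auto
  from sum.reindex_bij_betw[OF this, of g] show ?thesis by simp
qed

definition idx :: "'a set \<Rightarrow> 'a \<Rightarrow> nat" where
  "idx S v = inv_into {..<card S} ((!) (enum_set S)) v"

lemma idx:
  assumes S: "finite S"
  shows "\<And>v. v \<in> S \<Longrightarrow> idx S v < card S"
    "\<And>v. v \<in> S \<Longrightarrow> enum_set S ! idx S v = v"
    "\<And>i. i < card S \<Longrightarrow> idx S (enum_set S ! i) = i"
    "\<And>i. i < card S \<Longrightarrow> enum_set S ! i \<in> S"
proof -
  have b: "bij_betw ((!) (enum_set S)) {..<card S} S"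
    using enum_set[OF S] by (intro bij_betw_nth) auto
  show "\<And>v. v \<in> S \<Longrightarrow> idx S v < card S" unfolding idx_def
    using b by (metis bij_betw_def inv_into_into lessThan_iff)
  show "\<And>v. v \<in> S \<Longrightarrow> enum_set S ! idx S v = v" unfolding idx_def
    using b by (meson bij_betw_inv_into_right)
  show "\<And>i. i < card S \<Longrightarrow> idx S (enum_set S ! i) = i" unfolding idx_def
    using b by (simp add: bij_betw_def inv_into_f_f)
  show "\<And>i. i < card S \<Longrightarrow> enum_set S ! i \<in> S"
    using enum_set[OF S] by auto
qed

lemma smat_carrier: "finite S \<Longrightarrow> smat S f \<in> carrier_mat (card S) (card S)"
  unfolding smat_def Let_def using enum_set(3)[of S] by auto

lemma smat_index: "finite S \<Longrightarrow> i < card S \<Longrightarrow> j < card S \<Longrightarrow>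
   smat S f $$ (i,j) = f (enum_set S ! i) (enum_set S ! j)"
  unfolding smat_def Let_def using enum_set(3)[of S] by auto

lemma smat_sym:
  assumes S: "finite S" and fs: "\<And>u v. u \<in> S \<Longrightarrow> v \<in> S \<Longrightarrow> f u v = f v u"
  shows "\<And>i j. i < card S \<Longrightarrow> j < card S \<Longrightarrow> smat S f $$ (i,j) = smat S f $$ (j,i)"
  using smat_index[OF S] fs idx(4)[OF S] by auto

definition fqf :: "'a set \<Rightarrow> ('a \<Rightarrow> 'a \<Rightarrow> real) \<Rightarrow> ('a \<Rightarrow> real) \<Rightarrow> real" where
  "fqf S f x = (\<Sum>v\<in>S. \<Sum>u\<in>S. x v * f v u * x u)"

lemma qf_smat:
  assumes S: "finite S"
  shows "qf (card S) (smat S f) y = fqf S f (\<lambda>v. y (idx S v))"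
proof -
  have "qf (card S) (smat S f) y = (\<Sum>i<card S. \<Sum>j<card S. y (idx S (enum_set S ! i)) * f (enum_set S ! i) (enum_set S ! j) * y (idx S (enum_set S ! j)))"
    unfolding qf_def by (intro sum.cong refl) (simp add: smat_index[OF S] idx(3)[OF S])
  also have "\<dots> = (\<Sum>i<card S. \<Sum>u\<in>S. y (idx S (enum_set S ! i)) * f (enum_set S ! i) u * y (idx S u))"
    by (intro sum.cong refl) (rule enum_sum[OF S, of "\<lambda>u. y (idx S (enum_set S ! _)) * f (enum_set S ! _) u * y (idx S u)"])
  also have "\<dots> = fqf S f (\<lambda>v. y (idx S v))"
    unfolding fqf_def by (rule enum_sum[OF S, of "\<lambda>v. \<Sum>u\<in>S. y (idx S v) * f v u * y (idx S u)"])
  finally show ?thesis .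
qed

lemma smat_eig:
  assumes S: "finite S"
  shows "(\<mu> \<in># eigenvalues (smat S f)) \<longleftrightarrow>
    (\<exists>x. (\<exists>v\<in>S. x v \<noteq> 0) \<and> (\<forall>v\<in>S. (\<Sum>u\<in>S. f v u * x u) = \<mu> * x v))"
proof -
  let ?A = "smat S f" let ?n = "card S" let ?xs = "enum_set S"
  have A: "?A \<in> carrier_mat ?n ?n" by (rule smat_carrier[OF S])
  have p0: "char_poly ?A \<noteq> 0" using degree_monic_char_poly[OF A] by auto
  have "(\<mu> \<in># eigenvalues ?A) \<longleftrightarrow> eigenvalue ?A \<mu>"
    unfolding eigenvalues_def using p0 eigenvalue_root_char_poly[OF A] by simp
  also have "\<dots> \<longleftrightarrow> (\<exists>x. (\<exists>v\<in>S. x v \<noteq> 0) \<and> (\<forall>v\<in>S. (\<Sum>u\<in>S. f v u * x u) = \<mu> * x v))"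
  proof
    assume "eigenvalue ?A \<mu>"
    then obtain w where "eigenvector ?A w \<mu>" by (auto simp: eigenvalue_def)
    hence w: "w \<in> carrier_vec ?n" and w0: "w \<noteq> 0\<^sub>v ?n" and ev: "?A *\<^sub>v w = \<mu> \<cdot>\<^sub>v w"
      using A unfolding eigenvector_def by auto
    define x where "x v = w $ idx S v" for v
    have "\<forall>v\<in>S. (\<Sum>u\<in>S. f v u * x u) = \<mu> * x v"
    proof
      fix v assume v: "v \<in> S"
      let ?i = "idx S v"
      have i: "?i < ?n" using idx(1)[OF S v] .
      have "(?A *\<^sub>v w) $ ?i = (\<mu> \<cdot>\<^sub>v w) $ ?i" using ev by simp
      moreover have "(?A *\<^sub>v w) $ ?i = (\<Sum>j<?n. f v (?xs ! j) * x (?xs ! j))"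
        using i A w by (auto simp: mult_mat_vec_def scalar_prod_def row_def lessThan_atLeast0
           smat_index[OF S] idx(2,3)[OF S] v x_def intro!: sum.cong)
      moreover have "(\<mu> \<cdot>\<^sub>v w) $ ?i = \<mu> * x v" using i w by (auto simp: x_def)
      ultimately show "(\<Sum>u\<in>S. f v u * x u) = \<mu> * x v"
        using enum_sum[OF S, of "\<lambda>u. f v u * x u"] by simp
    qed
    moreover obtain k where k: "k < ?n" "w$k \<noteq> 0" using w w0
      by (metis eq_vecI carrier_vecD index_zero_vec(1) index_zero_vec(2))
    hence "x (?xs ! k) \<noteq> 0" "?xs ! k \<in> S" using idx[OF S] by (auto simp: x_def)
    ultimately show "\<exists>x. (\<exists>v\<in>S. x v \<noteq> 0) \<and> (\<forall>v\<in>S. (\<Sum>u\<in>S. f v u * x u) = \<mu> * x v)" by blast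
  next
    assume "\<exists>x. (\<exists>v\<in>S. x v \<noteq> 0) \<and> (\<forall>v\<in>S. (\<Sum>u\<in>S. f v u * x u) = \<mu> * x v)"
    then obtain x v where v: "v \<in> S" "x v \<noteq> 0" and eq: "\<forall>v\<in>S. (\<Sum>u\<in>S. f v u * x u) = \<mu> * x v" by blast
    define w where "w = vec ?n (\<lambda>i. x (?xs ! i))"
    have w: "w \<in> carrier_vec ?n" unfolding w_def by simp
    have "w $ idx S v \<noteq> 0" using v idx[OF S] by (simp add: w_def)
    hence w0: "w \<noteq> 0\<^sub>v ?n" using idx(1)[OF S v(1)] by auto
    have "?A *\<^sub>v w = \<mu> \<cdot>\<^sub>v w"
    proof (rule eq_vecI)
      show "dim_vec (?A *\<^sub>v w) = dim_vec (\<mu> \<cdot>\<^sub>v w)" using A w by simp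
      fix i assume "i < dim_vec (\<mu> \<cdot>\<^sub>v w)"
      hence i: "i < ?n" using w by simp
      have "(?A *\<^sub>v w) $ i = (\<Sum>j<?n. f (?xs ! i) (?xs ! j) * x (?xs ! j))"
        using i A w by (auto simp: mult_mat_vec_def scalar_prod_def row_def lessThan_atLeast0
           smat_index[OF S] w_def intro!: sum.cong)
      also have "\<dots> = (\<Sum>u\<in>S. f (?xs ! i) u * x u)" using enum_sum[OF S, of "\<lambda>u. f (?xs ! i) u * x u"] by simp
      also have "\<dots> = \<mu> * x (?xs ! i)" using eq idx(4)[OF S i] by blast
      also have "\<dots> = (\<mu> \<cdot>\<^sub>v w) $ i" using i by (simp add: w_def)
      finally show "(?A *\<^sub>v w) $ i = (\<mu> \<cdot>\<^sub>v w) $ i" .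
    qed
    hence "eigenvector ?A w \<mu>" using w w0 A unfolding eigenvector_def by auto
    thus "eigenvalue ?A \<mu>" unfolding eigenvalue_def by blast
  qed
  finally show ?thesis .
qed

lemma smat_spec:
  assumes S: "finite S" and fs: "\<And>u v. u \<in> S \<Longrightarrow> v \<in> S \<Longrightarrow> f u v = f v u"
  shows "size (eigenvalues (smat S f)) = card S"
    "sum_mset (eigenvalues (smat S f)) = (\<Sum>v\<in>S. f v v)"
    "sum_mset (image_mset (\<lambda>a. a^2) (eigenvalues (smat S f))) = (\<Sum>v\<in>S. \<Sum>u\<in>S. (f v u)^2)"
proof -
  let ?A = "smat S f" let ?n = "card S" let ?xs = "enum_set S"
  have A: "?A \<in> carrier_mat ?n ?n" by (rule smat_carrier[OF S])
  obtain as where as: "char_poly ?A = (\<Prod>a\<leftarrow>as. [:-a,1:])" "length as = ?n" "eigenvalues ?A = mset as"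
    using sym_eigenvalues[OF A smat_sym[OF S fs]] by blast
  show "size (eigenvalues ?A) = ?n" using as by simp
  have "sum_mset (eigenvalues ?A) = sum_list as" using as(3) by (simp add: sum_mset_sum_list)
  also have "\<dots> = (\<Sum>i<?n. ?A $$ (i,i))" by (rule factored_traces(1)[OF A as(1)])
  also have "\<dots> = (\<Sum>v\<in>S. f v v)"
    using enum_sum[OF S, of "\<lambda>v. f v v"] by (simp add: smat_index[OF S])
  finally show "sum_mset (eigenvalues ?A) = (\<Sum>v\<in>S. f v v)" .
  have "sum_mset (image_mset (\<lambda>a. a^2) (eigenvalues ?A)) = sum_list (map (\<lambda>a. a^2) as)"
    using as(3) by (simp add: sum_mset_sum_list flip: mset_map)
  also have "\<dots> = (\<Sum>i<?n. \<Sum>j<?n. ?A$$(i,j) * ?A$$(j,i))" by (rule factored_traces(2)[OF A as(1)])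
  also have "\<dots> = (\<Sum>i<?n. \<Sum>j<?n. (f (?xs!i) (?xs!j))^2)"
    by (intro sum.cong refl) (simp add: smat_index[OF S] fs idx(4)[OF S] power2_eq_square)
  also have "\<dots> = (\<Sum>i<?n. \<Sum>u\<in>S. (f (?xs!i) u)^2)"
    by (intro sum.cong refl) (rule enum_sum[OF S, of "\<lambda>u. (f (?xs!_) u)^2"])
  also have "\<dots> = (\<Sum>v\<in>S. \<Sum>u\<in>S. (f v u)^2)"
    by (rule enum_sum[OF S, of "\<lambda>v. \<Sum>u\<in>S. (f v u)^2"])
  finally show "sum_mset (image_mset (\<lambda>a. a^2) (eigenvalues ?A)) = (\<Sum>v\<in>S. \<Sum>u\<in>S. (f v u)^2)" .
qed

lemma smat_zero_mult:
  assumes S: "finite S" and fs: "\<And>u v. u \<in> S \<Longrightarrow> v \<in> S \<Longrightarrow> f u v = f v u"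
    and psd: "\<And>x. fqf S f x \<ge> 0"
    and v0: "v0 \<in> S"
    and pd: "\<And>x. x v0 = 0 \<Longrightarrow> fqf S f x = 0 \<Longrightarrow> \<forall>v\<in>S. x v = 0"
  shows "count (eigenvalues (smat S f)) 0 \<le> 1"
proof -
  let ?A = "smat S f" let ?n = "card S" let ?xs = "enum_set S"
  have A: "?A \<in> carrier_mat ?n ?n" by (rule smat_carrier[OF S])
  show ?thesis
  proof (rule zero_mult_le1[OF A smat_sym[OF S fs]])
    show "\<And>y. qf ?n ?A y \<ge> 0" using psd qf_smat[OF S] by simp
    show "idx S v0 < ?n" using idx(1)[OF S v0] .
    fix y assume y0: "y (idx S v0) = 0" and q: "qf ?n ?A y = 0"
    have "\<forall>v\<in>S. y (idx S v) = 0" by (rule pd, use y0 in simp, use q qf_smat[OF S] in simp)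
    thus "\<forall>k<?n. y k = 0" using idx[OF S] by metis
  qed
qed

definition Bt :: "('a \<Rightarrow> real) \<Rightarrow> 'a set \<Rightarrow> real" where
  "Bt x e = (\<Sum>v\<in>e. x v)"

definition Bx :: "'a set set \<Rightarrow> ('a set \<Rightarrow> real) \<Rightarrow> 'a \<Rightarrow> real" where
  "Bx F y v = (\<Sum>e\<in>{e\<in>F. v\<in>e}. y e)"

definition slf :: "'a set set \<Rightarrow> 'a \<Rightarrow> 'a \<Rightarrow> real" where
  "slf F a b = (if a = b then real (degree F a) else 0) + (if {a,b} \<in> F then 1 else 0)"

definition lgf :: "'a set set \<Rightarrow> 'a set \<Rightarrow> 'a set \<Rightarrow> real" where
  "lgf F a b = (if {a,b} \<in> line_graph_edges F then 1 else 0)"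

definition nbrs :: "'a set set \<Rightarrow> 'a \<Rightarrow> 'a set" where
  "nbrs F v = {u. {v,u} \<in> F}"

lemma sg_finite: "simple_graph W F \<Longrightarrow> finite F"
proof -
  assume g: "simple_graph W F"
  hence "F \<subseteq> Pow W" unfolding simple_graph_def by auto
  moreover have "finite W" using g unfolding simple_graph_def by auto
  ultimately show "finite F" by (rule finite_subset[OF _ finite_Pow_iff[THEN iffD2]])
qed

lemma sg_edge: "simple_graph W F \<Longrightarrow> e \<in> F \<Longrightarrow> \<exists>u v. u \<noteq> v \<and> u \<in> W \<and> v \<in> W \<and> e = {u,v}"
  unfolding simple_graph_def by auto

lemma sg_edge_sub: "simple_graph W F \<Longrightarrow> e \<in> F \<Longrightarrow> e \<subseteq> W"
  using sg_edge by fastforce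

lemma sg_fin_edge: "simple_graph W F \<Longrightarrow> e \<in> F \<Longrightarrow> finite e"
  using sg_edge by fastforce

lemma sg_card_edge: "simple_graph W F \<Longrightarrow> e \<in> F \<Longrightarrow> card e = 2"
  using sg_edge by fastforce

lemma sg_noloop: "simple_graph W F \<Longrightarrow> {v,v} \<notin> F"
  using sg_edge by fastforce

lemma sg_pair: "simple_graph W F \<Longrightarrow> {u,v} \<in> F \<Longrightarrow> u \<noteq> v \<and> u \<in> W \<and> v \<in> W"
  using sg_edge[of W F "{u,v}"] by (auto simp: doubleton_eq_iff)

lemma nbrs_sub: "simple_graph W F \<Longrightarrow> nbrs F v \<subseteq> W - {v}"
  unfolding nbrs_def using sg_pair by fastforce

lemma nbrs_bij:
  assumes g: "simple_graph W F"
  shows "bij_betw (\<lambda>u. {v,u}) (nbrs F v) {e\<in>F. v\<in>e}"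
proof -
  have "inj_on (\<lambda>u. {v,u}) (nbrs F v)"
  proof (rule inj_onI)
    fix u u' assume u: "u \<in> nbrs F v" and u': "u' \<in> nbrs F v" and eq: "{v,u} = {v,u'}"
    have "u \<noteq> v" "u' \<noteq> v" using u u' sg_pair[OF g] unfolding nbrs_def by auto
    thus "u = u'" using eq by (auto simp: doubleton_eq_iff)
  qed
  moreover have "(\<lambda>u. {v,u}) ` nbrs F v = {e\<in>F. v\<in>e}"
  proof
    show "(\<lambda>u. {v,u}) ` nbrs F v \<subseteq> {e\<in>F. v\<in>e}" unfolding nbrs_def by auto
    show "{e\<in>F. v\<in>e} \<subseteq> (\<lambda>u. {v,u}) ` nbrs F v"
    proof
      fix e assume e: "e \<in> {e\<in>F. v\<in>e}"
      then obtain a b where ab: "e = {a,b}" using sg_edge[OF g] by blast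
      show "e \<in> (\<lambda>u. {v,u}) ` nbrs F v"
      proof (cases "v = a")
        case True thus ?thesis using e ab unfolding nbrs_def by auto
      next
        case False hence "v = b" using e ab by auto
        thus ?thesis using e ab unfolding nbrs_def by (auto simp: insert_commute)
      qed
    qed
  qed
  ultimately show ?thesis unfolding bij_betw_def by auto
qed

lemma degree_nbrs: "simple_graph W F \<Longrightarrow> degree F v = card (nbrs F v)"
  unfolding degree_def using bij_betw_same_card[OF nbrs_bij] by metis

lemma sum_edges_at:
  assumes g: "simple_graph W F"
  shows "(\<Sum>e\<in>{e\<in>F. v\<in>e}. h e) = (\<Sum>u\<in>nbrs F v. h {v,u})"
  using sum.reindex_bij_betw[OF nbrs_bij[OF g], of h] by simp

lemma sl_eq:
  assumes g: "simple_graph W F" and v: "v \<in> W"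
  shows "(\<Sum>u\<in>W. slf F v u * x u) = Bx F (Bt x) v"
proof -
  have fin: "finite W" using g unfolding simple_graph_def by auto
  have nb: "nbrs F v \<subseteq> W - {v}" by (rule nbrs_sub[OF g])
  have "(\<Sum>u\<in>W. slf F v u * x u) = (\<Sum>u\<in>W. (if v = u then real (degree F v) * x u else 0))
       + (\<Sum>u\<in>W. (if {v,u} \<in> F then x u else 0))"
    unfolding sum.distrib[symmetric] by (intro sum.cong refl) (simp add: slf_def distrib_right)
  also have "(\<Sum>u\<in>W. (if v = u then real (degree F v) * x u else 0)) = real (degree F v) * x v"
    using fin v by simp
  also have "(\<Sum>u\<in>W. (if {v,u} \<in> F then x u else 0)) = (\<Sum>u\<in>nbrs F v. x u)"
    using fin nb by (simp add: sum.inter_filter[symmetric] nbrs_def) (rule sum.cong, auto)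
  finally have L: "(\<Sum>u\<in>W. slf F v u * x u) = real (degree F v) * x v + (\<Sum>u\<in>nbrs F v. x u)" .
  have "Bx F (Bt x) v = (\<Sum>u\<in>nbrs F v. Bt x {v,u})"
    unfolding Bx_def by (rule sum_edges_at[OF g])
  also have "\<dots> = (\<Sum>u\<in>nbrs F v. x v + x u)"
  proof (rule sum.cong[OF refl])
    fix u assume "u \<in> nbrs F v"
    hence "u \<noteq> v" using nb by auto
    thus "Bt x {v,u} = x v + x u" unfolding Bt_def by simp
  qed
  also have "\<dots> = real (card (nbrs F v)) * x v + (\<Sum>u\<in>nbrs F v. x u)"
    by (simp add: sum.distrib)
  finally show ?thesis using degree_nbrs[OF g] L by simp
qed

lemma swap_incidence:
  assumes g: "simple_graph W F"
  shows "(\<Sum>e\<in>F. \<Sum>w\<in>e. h e w) = (\<Sum>w\<in>W. \<Sum>e\<in>{e\<in>F. w\<in>e}. h e w)"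
proof -
  have fin: "finite W" using g unfolding simple_graph_def by auto
  have fF: "finite F" by (rule sg_finite[OF g])
  have "(\<Sum>e\<in>F. \<Sum>w\<in>e. h e w) = (\<Sum>e\<in>F. \<Sum>w\<in>W. if w \<in> e then h e w else 0)"
  proof (rule sum.cong[OF refl])
    fix e assume e: "e \<in> F"
    have "e \<subseteq> W" by (rule sg_edge_sub[OF g e])
    hence "{w\<in>W. w\<in>e} = e" by auto
    moreover have "(\<Sum>w\<in>W. if w \<in> e then h e w else 0) = (\<Sum>w\<in>{w\<in>W. w\<in>e}. h e w)"
      using fin by (simp add: sum.inter_filter)
    ultimately show "(\<Sum>w\<in>e. h e w) = (\<Sum>w\<in>W. if w \<in> e then h e w else 0)" by simp
  qed
  also have "\<dots> = (\<Sum>w\<in>W. \<Sum>e\<in>F. if w \<in> e then h e w else 0)" by (rule sum.swap)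
  also have "\<dots> = (\<Sum>w\<in>W. \<Sum>e\<in>{e\<in>F. w\<in>e}. h e w)"
    using fF by (simp add: sum.inter_filter)
  finally show ?thesis .
qed

lemma handshake:
  assumes g: "simple_graph W F"
  shows "(\<Sum>v\<in>W. real (degree F v)) = 2 * real (card F)"
proof -
  have "(\<Sum>v\<in>W. real (degree F v)) = (\<Sum>v\<in>W. \<Sum>e\<in>{e\<in>F. v\<in>e}. (1::real))"
    unfolding degree_def by simp
  also have "\<dots> = (\<Sum>e\<in>F. \<Sum>w\<in>e. (1::real))" by (rule swap_incidence[OF g, symmetric])
  also have "\<dots> = (\<Sum>e\<in>F. 2)" by (intro sum.cong refl) (simp add: sg_card_edge[OF g])
  finally show ?thesis by simp
qed

lemma lgf_simp:
  assumes g: "simple_graph W F" and e: "e \<in> F" and e': "e' \<in> F"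
  shows "lgf F e e' = (if e \<noteq> e' \<and> e \<inter> e' \<noteq> {} then 1 else 0)"
proof -
  have "{e,e'} \<in> line_graph_edges F \<longleftrightarrow> e \<noteq> e' \<and> e \<inter> e' \<noteq> {}"
  proof
    assume "{e,e'} \<in> line_graph_edges F"
    then obtain f h where fh: "{e,e'} = {f,h}" "f \<in> F" "h \<in> F" "f \<noteq> h" "f \<inter> h \<noteq> {}"
      unfolding line_graph_edges_def by blast
    thus "e \<noteq> e' \<and> e \<inter> e' \<noteq> {}" by (auto simp: doubleton_eq_iff)
  next
    assume "e \<noteq> e' \<and> e \<inter> e' \<noteq> {}"
    thus "{e,e'} \<in> line_graph_edges F" unfolding line_graph_edges_def using e e' by blast
  qed
  thus ?thesis unfolding lgf_def by simp
qed

lemma card_meet: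
  assumes g: "simple_graph W F" and e: "e \<in> F" and e': "e' \<in> F" and ne: "e \<noteq> e'"
  shows "card (e \<inter> e') = (if e \<inter> e' \<noteq> {} then 1 else 0)"
proof -
  obtain a b where ab: "a \<noteq> b" "e = {a,b}" using sg_edge[OF g e] by blast
  obtain c d where cd: "c \<noteq> d" "e' = {c,d}" using sg_edge[OF g e'] by blast
  show ?thesis using ab cd ne by (auto simp: Int_insert_left Int_insert_right doubleton_eq_iff insert_commute)
qed

lemma lg_eq:
  assumes g: "simple_graph W F" and e: "e \<in> F"
  shows "(\<Sum>e'\<in>F. lgf F e e' * x e') + 2 * x e = Bt (Bx F x) e"
proof -
  have fF: "finite F" by (rule sg_finite[OF g])
  have fe: "finite e" by (rule sg_fin_edge[OF g e])
  have "Bt (Bx F x) e = (\<Sum>w\<in>e. \<Sum>e'\<in>F. if w \<in> e' then x e' else 0)"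
    unfolding Bt_def Bx_def using fF by (simp add: sum.inter_filter)
  also have "\<dots> = (\<Sum>e'\<in>F. \<Sum>w\<in>e. if w \<in> e' then x e' else 0)" by (rule sum.swap)
  also have "\<dots> = (\<Sum>e'\<in>F. real (card (e \<inter> e')) * x e')"
  proof (rule sum.cong[OF refl])
    fix e' assume "e' \<in> F"
    have "(\<Sum>w\<in>e. if w \<in> e' then x e' else 0) = (\<Sum>w\<in>e \<inter> e'. x e')"
      using fe by (simp add: sum.inter_filter[symmetric]) (metis Int_def)
    thus "(\<Sum>w\<in>e. if w \<in> e' then x e' else 0) = real (card (e \<inter> e')) * x e'" by simp
  qed
  also have "\<dots> = real (card (e \<inter> e)) * x e + (\<Sum>e'\<in>F-{e}. real (card (e \<inter> e')) * x e')"
    by (rule sum.remove[OF fF e])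
  also have "(\<Sum>e'\<in>F-{e}. real (card (e \<inter> e')) * x e') = (\<Sum>e'\<in>F-{e}. lgf F e e' * x e')"
    by (intro sum.cong refl) (auto simp: card_meet[OF g e] lgf_simp[OF g e])
  also have "\<dots> = (\<Sum>e'\<in>F. lgf F e e' * x e')"
    using sum.remove[OF fF e, of "\<lambda>e'. lgf F e e' * x e'"] lgf_simp[OF g e e] by simp
  finally show ?thesis using sg_card_edge[OF g e] by simp
qed

lemma adj_smat: "adj_matrix W F = smat W (\<lambda>a b. if {a,b} \<in> F then 1 else 0)"
  unfolding adj_matrix_def smat_def Let_def by simp

lemma lg_smat: "adj_matrix F (line_graph_edges F) = smat F (lgf F)"
  unfolding adj_smat lgf_def ..

lemma sl_smat:
  assumes W: "finite W"
  shows "signless_laplacian W F = smat W (slf F)"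
proof -
  let ?xs = "enum_set W"
  have d: "distinct ?xs" using enum_set[OF W] by auto
  show ?thesis unfolding signless_laplacian_def smat_def Let_def slf_def
  proof (rule eq_matI)
    fix i j assume i: "i < dim_row (mat (length ?xs) (length ?xs) (\<lambda>(i, j). (if ?xs ! i = ?xs ! j then real (degree F (?xs ! i)) else 0) + (if {?xs ! i, ?xs ! j} \<in> F then 1 else 0)))"
      and j: "j < dim_col (mat (length ?xs) (length ?xs) (\<lambda>(i, j). (if ?xs ! i = ?xs ! j then real (degree F (?xs ! i)) else 0) + (if {?xs ! i, ?xs ! j} \<in> F then 1 else 0)))"
    have "(i = j) = (?xs ! i = ?xs ! j)" using i j d by (simp add: nth_eq_iff_index_eq)
    thus "mat (length ?xs) (length ?xs) (\<lambda>(i, j). (if i = j then real (degree F (?xs ! i)) else 0) + (if {?xs ! i, ?xs ! j} \<in> F then 1 else 0)) $$ (i, j) =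
          mat (length ?xs) (length ?xs) (\<lambda>(i, j). (if ?xs ! i = ?xs ! j then real (degree F (?xs ! i)) else 0) + (if {?xs ! i, ?xs ! j} \<in> F then 1 else 0)) $$ (i, j)"
      using i j by simp
  qed auto
qed

lemma lgf_sym: "lgf F a b = lgf F b a"
  unfolding lgf_def by (simp add: insert_commute)

lemma slf_sym: "slf F a b = slf F b a"
  unfolding slf_def by (simp add: insert_commute)

definition QE :: "'a set \<Rightarrow> 'a set set \<Rightarrow> real \<Rightarrow> bool" where
  "QE W F \<mu> = (\<exists>x. (\<exists>v\<in>W. x v \<noteq> 0) \<and> (\<forall>v\<in>W. Bx F (Bt x) v = \<mu> * x v))"

definition LE :: "'a set set \<Rightarrow> real \<Rightarrow> bool" where
  "LE F \<mu> = (\<exists>x. (\<exists>e\<in>F. x e \<noteq> 0) \<and> (\<forall>e\<in>F. Bt (Bx F x) e = \<mu> * x e))"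

lemma Q_eig:
  assumes g: "simple_graph W F"
  shows "(\<mu> \<in># eigenvalues (signless_laplacian W F)) = QE W F \<mu>"
proof -
  have W: "finite W" using g unfolding simple_graph_def by auto
  show ?thesis unfolding sl_smat[OF W] smat_eig[OF W] QE_def
    by (simp add: sl_eq[OF g])
qed

lemma L_eig:
  assumes g: "simple_graph W F"
  shows "(lam \<in># eigenvalues (adj_matrix F (line_graph_edges F))) = LE F (lam + 2)"
proof -
  have F: "finite F" by (rule sg_finite[OF g])
  have "(\<forall>e\<in>F. (\<Sum>u\<in>F. lgf F e u * x u) = lam * x e) = (\<forall>e\<in>F. Bt (Bx F x) e = (lam + 2) * x e)" for x
  proof -
    have "\<And>e. e \<in> F \<Longrightarrow> Bt (Bx F x) e = (\<Sum>u\<in>F. lgf F e u * x u) + 2 * x e"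
      using lg_eq[OF g] by simp
    thus ?thesis by (simp add: distrib_right)
  qed
  thus ?thesis unfolding lg_smat smat_eig[OF F] LE_def by simp
qed

lemma Bx_lin: "Bx F (\<lambda>e. c * y e) v = c * Bx F y v"
  unfolding Bx_def by (simp add: sum_distrib_left)

lemma Bt_lin: "Bt (\<lambda>v. c * y v) e = c * Bt y e"
  unfolding Bt_def by (simp add: sum_distrib_left)

lemma LE_QE:
  assumes g: "simple_graph W F" and mu: "\<mu> \<noteq> 0"
  shows "LE F \<mu> = QE W F \<mu>"
proof
  assume "LE F \<mu>"
  then obtain x e0 where e0: "e0 \<in> F" "x e0 \<noteq> 0" and eq: "\<forall>e\<in>F. Bt (Bx F x) e = \<mu> * x e"
    unfolding LE_def by blast
  define y where "y = Bx F x"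
  have "\<forall>v\<in>W. Bx F (Bt y) v = \<mu> * y v"
  proof
    fix v assume "v \<in> W"
    have ey: "\<forall>e\<in>F. Bt y e = \<mu> * x e" using eq unfolding y_def by simp
    have "Bx F (Bt y) v = Bx F (\<lambda>e. \<mu> * x e) v" unfolding Bx_def using ey by (intro sum.cong) auto
    thus "Bx F (Bt y) v = \<mu> * y v" unfolding y_def Bx_lin .
  qed
  moreover have "\<exists>v\<in>W. y v \<noteq> 0"
  proof (rule ccontr)
    assume "\<not> ?thesis"
    hence "Bt y e0 = 0" unfolding Bt_def using sg_edge_sub[OF g e0(1)] by (auto intro: sum.neutral)
    thus False using eq e0 mu unfolding y_def by simp
  qed
  ultimately show "QE W F \<mu>" unfolding QE_def by blast
next
  assume "QE W F \<mu>"
  then obtain y v0 where v0: "v0 \<in> W" "y v0 \<noteq> 0" and eq: "\<forall>v\<in>W. Bx F (Bt y) v = \<mu> * y v"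
    unfolding QE_def by blast
  define x where "x = Bt y"
  have "\<forall>e\<in>F. Bt (Bx F x) e = \<mu> * x e"
  proof
    fix e assume e: "e \<in> F"
    have ex: "\<forall>v\<in>W. Bx F x v = \<mu> * y v" using eq unfolding x_def by simp
    have "Bt (Bx F x) e = Bt (\<lambda>v. \<mu> * y v) e" unfolding Bt_def using ex sg_edge_sub[OF g e]
      by (intro sum.cong) auto
    thus "Bt (Bx F x) e = \<mu> * x e" unfolding x_def Bt_lin .
  qed
  moreover have "\<exists>e\<in>F. x e \<noteq> 0"
  proof (rule ccontr)
    assume "\<not> ?thesis"
    hence "Bx F x v0 = 0" unfolding Bx_def by (auto intro: sum.neutral)
    thus False using eq v0 mu unfolding x_def by simp
  qed
  ultimately show "LE F \<mu>" unfolding LE_def by blast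
qed

lemma LE_nonneg:
  assumes g: "simple_graph W F" and le: "LE F \<mu>"
  shows "\<mu> \<ge> 0"
proof -
  obtain x e0 where e0: "e0 \<in> F" "x e0 \<noteq> 0" and eq: "\<forall>e\<in>F. Bt (Bx F x) e = \<mu> * x e"
    using le unfolding LE_def by blast
  have F: "finite F" by (rule sg_finite[OF g])
  define y where "y = Bx F x"
  have "(\<Sum>e\<in>F. x e * Bt y e) = (\<Sum>e\<in>F. \<Sum>w\<in>e. x e * y w)"
    unfolding Bt_def by (simp add: sum_distrib_left)
  also have "\<dots> = (\<Sum>w\<in>W. \<Sum>e\<in>{e\<in>F. w\<in>e}. x e * y w)" by (rule swap_incidence[OF g])
  also have "\<dots> = (\<Sum>w\<in>W. y w * y w)" unfolding y_def Bx_def by (simp add: sum_distrib_right mult.commute)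
  finally have "(\<Sum>e\<in>F. x e * Bt y e) \<ge> 0" by (metis sum_nonneg zero_le_square)
  moreover have "(\<Sum>e\<in>F. x e * Bt y e) = \<mu> * (\<Sum>e\<in>F. (x e)^2)"
    unfolding y_def using eq by (simp add: sum_distrib_left power2_eq_square mult.commute mult.left_commute)
  moreover have "(\<Sum>e\<in>F. (x e)^2) > 0"
  proof -
    have "(x e0)^2 > 0" using e0 by simp
    moreover have "(x e0)^2 \<le> (\<Sum>e\<in>F. (x e)^2)" by (rule member_le_sum[OF e0(1)]) (auto simp: F)
    ultimately show ?thesis by linarith
  qed
  ultimately show ?thesis by (simp add: zero_le_mult_iff)
qed

lemma mset_nonpos_sum:
  fixes g :: "real \<Rightarrow> real"
  assumes "\<forall>x\<in>#M. g x \<le> 0"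
  shows "sum_mset (image_mset g M) \<le> 0 \<and> (sum_mset (image_mset g M) = 0 \<longleftrightarrow> (\<forall>x\<in>#M. g x = 0))"
  using assms
proof (induct M)
  case (add x M)
  have "g x \<le> 0" "sum_mset (image_mset g M) \<le> 0" using add by auto
  thus ?case using add by (auto simp: add_nonpos_eq_0_iff)
qed simp

lemma mset_energy_ident:
  fixes M :: "real multiset"
  shows "sum_mset (image_mset abs M) = sum_mset (image_mset (\<lambda>x. \<bar>x\<bar> - x - 4 * (if x < 0 then 1 else 0)) M)
     + sum_mset M + 4 * real (size (filter_mset (\<lambda>x. x < 0) M))"
proof (induct M)
  case (add x M)
  thus ?case by (cases "x < 0") (simp_all add: algebra_simps)
qed simp

lemma energy_mset:
  fixes M :: "real multiset"
  assumes s: "sum_mset M = 0" and ge: "\<forall>x\<in>#M. x \<ge> -2"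
  shows "sum_mset (image_mset abs M) \<le> 4 * real (size (filter_mset (\<lambda>x. x < 0) M))
    \<and> (sum_mset (image_mset abs M) = 4 * real (size (filter_mset (\<lambda>x. x < 0) M)) \<longleftrightarrow> (\<forall>x\<in>#M. x < 0 \<longrightarrow> x = -2))"
proof -
  let ?g = "\<lambda>x. \<bar>x\<bar> - x - 4 * (if x < 0 then 1 else 0) :: real"
  have "\<forall>x\<in>#M. ?g x \<le> 0" using ge by auto
  from mset_nonpos_sum[OF this] have *: "sum_mset (image_mset ?g M) \<le> 0"
    "sum_mset (image_mset ?g M) = 0 \<longleftrightarrow> (\<forall>x\<in>#M. ?g x = 0)" by auto
  have "(\<forall>x\<in>#M. ?g x = 0) \<longleftrightarrow> (\<forall>x\<in>#M. x < 0 \<longrightarrow> x = -2)" by (auto split: if_splits)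
  thus ?thesis using * mset_energy_ident[of M] s by auto
qed

lemma adj_sym: "adjacent E a b = adjacent E b a"
  unfolding adjacent_def by (simp add: insert_commute)

lemma rtc_sym: "(adjacent E)\<^sup>*\<^sup>* a b \<Longrightarrow> (adjacent E)\<^sup>*\<^sup>* b a"
proof (induct rule: rtranclp_induct)
  case (step y z)
  have "adjacent E z y" using step(2) adj_sym by metis
  thus ?case using step(3) by (meson converse_rtranclp_into_rtranclp)
qed simp

lemma rtc_in:
  assumes g: "simple_graph V E" and r: "(adjacent E)\<^sup>*\<^sup>* a b" and a: "a \<in> V"
  shows "b \<in> V"
  using r
proof (induct rule: rtranclp_induct)
  case (step y z) thus ?case using sg_pair[OF g] unfolding adjacent_def by blast
qed (rule a)

locale comp =
  fixes V :: "'a set" and E :: "'a set set" and v0 :: 'a and C :: "'a set"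
  assumes g: "simple_graph V E" and v0: "v0 \<in> V" and C: "C = {u\<in>V. (adjacent E)\<^sup>*\<^sup>* v0 u}"
begin

abbreviation "EC \<equiv> induced_edges E C"

lemma finV: "finite V" using g unfolding simple_graph_def by auto

lemma CV: "C \<subseteq> V" using C by auto

lemma finC: "finite C" using finite_subset[OF CV finV] .

lemma v0C: "v0 \<in> C" using C v0 by auto

lemma c1: "v \<in> C \<Longrightarrow> {v,u} \<in> E \<Longrightarrow> u \<in> C"
  using C sg_pair[OF g] unfolding adjacent_def
  by (auto intro: rtranclp.rtrancl_into_rtrancl[where b=v])

lemma c2: assumes v: "v \<in> C" and e: "e \<in> E" and ve: "v \<in> e" shows "e \<subseteq> C"
proof -
  obtain a b where ab: "e = {a,b}" using sg_edge[OF g e] by blast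
  show ?thesis
  proof (cases "v = a")
    case True thus ?thesis using c1[OF v, of b] e ab v by auto
  next
    case False hence "v = b" using ve ab by auto
    thus ?thesis using c1[OF v, of a] e ab v by (auto simp: insert_commute)
  qed
qed

lemma c2': "v \<notin> C \<Longrightarrow> e \<in> E \<Longrightarrow> v \<in> e \<Longrightarrow> e \<inter> C = {}"
  using c2 by blast

lemma gC: "simple_graph C EC"
  unfolding simple_graph_def induced_edges_def using finC sg_edge[OF g] by fastforce

lemma c4: "v \<in> C \<Longrightarrow> {e\<in>EC. v\<in>e} = {e\<in>E. v\<in>e}"
  unfolding induced_edges_def using c2 by blast

lemma deg_C: "v \<in> C \<Longrightarrow> degree EC v = degree E v"
  unfolding degree_def using c4 by simp

lemma Bx_C: "v \<in> C \<Longrightarrow> Bx EC y v = Bx E y v"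
  unfolding Bx_def using c4 by simp

lemma propagate:
  assumes v1: "v1 \<in> C" and P1: "P v1"
    and step: "\<And>u w. u \<in> C \<Longrightarrow> {u,w} \<in> EC \<Longrightarrow> P u \<Longrightarrow> P w"
  shows "\<forall>u\<in>C. P u"
proof
  fix u assume u: "u \<in> C"
  have r0: "(adjacent E)\<^sup>*\<^sup>* v0 v1" "(adjacent E)\<^sup>*\<^sup>* v0 u" using v1 u C by auto
  have "(adjacent E)\<^sup>*\<^sup>* v1 u" using rtc_sym[OF r0(1)] r0(2) by (rule rtranclp_trans)
  hence "u \<in> C \<and> P u"
  proof (induct rule: rtranclp_induct)
    case base thus ?case using v1 P1 by simp
  next
    case (step y z)
    hence yC: "y \<in> C" and Py: "P y" and yz: "{y,z} \<in> E" by (auto simp: adjacent_def)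
    have zC: "z \<in> C" by (rule c1[OF yC yz])
    have "{y,z} \<in> EC" using yz yC zC unfolding induced_edges_def by auto
    thus ?case using zC assms(3)[OF yC _ Py] by simp
  qed
  thus "P u" by simp
qed

lemma deg_le1_false:
  assumes d: "\<forall>v\<in>C. degree EC v \<le> 1" and m: "card EC \<ge> 2"
  shows False
proof -
  have fE: "finite EC" using sg_finite[OF gC] .
  have "EC \<noteq> {}" using m by auto
  then obtain e1 where e1: "e1 \<in> EC" by auto
  obtain a b where ab: "a \<noteq> b" "e1 = {a,b}" "a \<in> C" "b \<in> C" using sg_edge[OF gC e1] by blast
  have "\<forall>u\<in>C. u \<in> {a,b}"
  proof (rule propagate[OF ab(3)])
    show "a \<in> {a,b}" by simp
    fix u w assume u: "u \<in> C" and uw: "{u,w} \<in> EC" and ua: "u \<in> {a,b}"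
    have "{e\<in>EC. u\<in>e} \<supseteq> {e1, {u,w}}" using e1 ab ua uw by auto
    moreover have "card {e\<in>EC. u\<in>e} \<le> 1" using d u unfolding degree_def by auto
    moreover have "finite {e\<in>EC. u\<in>e}" using fE by auto
    ultimately have le: "card {e1, {u,w}} \<le> 1" using card_mono[of "{e\<in>EC. u\<in>e}" "{e1, {u,w}}"] by linarith
    have "e1 = {u,w}"
    proof (rule ccontr)
      assume "e1 \<noteq> {u,w}"
      hence "card {e1, {u,w}} = 2" by simp
      thus False using le by simp
    qed
    thus "w \<in> {a,b}" using ab by auto
  qed
  hence "C \<subseteq> {a,b}" by auto
  have "EC \<subseteq> {e1}"
  proof
    fix e assume e: "e \<in> EC"
    obtain c d where cd: "c \<noteq> d" "e = {c,d}" "c \<in> C" "d \<in> C" using sg_edge[OF gC e] by blast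
    thus "e \<in> {e1}" using \<open>C \<subseteq> {a,b}\<close> ab by auto
  qed
  hence "card EC \<le> card {e1}" by (rule card_mono[rotated]) simp
  hence "card EC \<le> 1" by simp
  thus False using m by simp
qed


lemma kernel_prop:
  assumes k: "\<forall>e\<in>EC. Bt x e = 0" and v1: "v1 \<in> C" and x1: "x v1 = 0"
  shows "\<forall>v\<in>C. x v = 0"
proof (rule propagate[OF v1, of "\<lambda>u. x u = 0"])
  show "x v1 = 0" by (rule x1)
  fix u w assume "u \<in> C" "{u,w} \<in> EC" "x u = 0"
  moreover have "u \<noteq> w" using sg_pair[OF gC \<open>{u,w} \<in> EC\<close>] by simp
  hence "Bt x {u,w} = x u + x w" by (simp add: Bt_def)
  ultimately show "x w = 0" using k by simp
qed

lemma bip_of_kernel: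
  assumes k: "\<forall>e\<in>EC. Bt x e = 0" and v1: "v1 \<in> C" and x1: "x v1 \<noteq> 0"
  shows "bipartite C EC"
proof -
  have all: "\<forall>u\<in>C. \<bar>x u\<bar> = \<bar>x v1\<bar>"
  proof (rule propagate[OF v1, of "\<lambda>u. \<bar>x u\<bar> = \<bar>x v1\<bar>"])
    fix u w assume "u \<in> C" "{u,w} \<in> EC" "\<bar>x u\<bar> = \<bar>x v1\<bar>"
    moreover have "u \<noteq> w" using sg_pair[OF gC \<open>{u,w} \<in> EC\<close>] by simp
    hence "Bt x {u,w} = x u + x w" by (simp add: Bt_def)
    ultimately show "\<bar>x w\<bar> = \<bar>x v1\<bar>" using k by simp
  qed simp
  show ?thesis unfolding bipartite_def
  proof (intro exI[of _ "\<lambda>u. x u > 0"] ballI impI)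
    fix u w assume u: "u \<in> C" and w: "w \<in> C" and uw: "{u,w} \<in> EC"
    have "u \<noteq> w" using sg_pair[OF gC uw] by simp
    hence "Bt x {u,w} = x u + x w" by (simp add: Bt_def)
    hence "x u + x w = 0" using k uw by simp
    moreover have "x u \<noteq> 0" using all u x1 by force
    ultimately show "(x u > 0) \<noteq> (x w > 0)" by linarith
  qed
qed

end

lemma form_sq:
  assumes g: "simple_graph W F"
  shows "fqf W (slf F) x = (\<Sum>e\<in>F. (Bt x e)^2)"
proof -
  have "fqf W (slf F) x = (\<Sum>v\<in>W. x v * (\<Sum>u\<in>W. slf F v u * x u))"
    unfolding fqf_def by (simp add: sum_distrib_left mult.assoc)
  also have "\<dots> = (\<Sum>v\<in>W. x v * Bx F (Bt x) v)" by (intro sum.cong refl) (simp add: sl_eq[OF g])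
  also have "\<dots> = (\<Sum>v\<in>W. \<Sum>e\<in>{e\<in>F. v\<in>e}. x v * Bt x e)" unfolding Bx_def by (simp add: sum_distrib_left)
  also have "\<dots> = (\<Sum>e\<in>F. \<Sum>v\<in>e. x v * Bt x e)" by (rule swap_incidence[OF g, symmetric])
  also have "\<dots> = (\<Sum>e\<in>F. (Bt x e)^2)" by (intro sum.cong refl) (simp add: Bt_def sum_distrib_right power2_eq_square)
  finally show ?thesis .
qed

lemma form_eig:
  assumes g: "simple_graph W F" and eq: "\<forall>v\<in>W. Bx F (Bt x) v = \<mu> * x v"
  shows "fqf W (slf F) x = \<mu> * (\<Sum>v\<in>W. (x v)^2)"
proof -
  have "fqf W (slf F) x = (\<Sum>v\<in>W. x v * (\<Sum>u\<in>W. slf F v u * x u))"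
    unfolding fqf_def by (simp add: sum_distrib_left mult.assoc)
  also have "\<dots> = (\<Sum>v\<in>W. x v * Bx F (Bt x) v)" by (intro sum.cong refl) (simp add: sl_eq[OF g])
  also have "\<dots> = (\<Sum>v\<in>W. \<mu> * (x v)^2)" using eq by (intro sum.cong refl) (simp add: power2_eq_square)
  finally show ?thesis by (simp add: sum_distrib_left)
qed

lemma QE_nonneg:
  assumes g: "simple_graph W F" and q: "QE W F \<mu>"
  shows "\<mu> \<ge> 0"
proof -
  obtain x v1 where v1: "v1 \<in> W" "x v1 \<noteq> 0" and eq: "\<forall>v\<in>W. Bx F (Bt x) v = \<mu> * x v"
    using q unfolding QE_def by blast
  have W: "finite W" using g unfolding simple_graph_def by auto
  have "(\<Sum>e\<in>F. (Bt x e)^2) \<ge> 0" by (simp add: sum_nonneg)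
  hence "\<mu> * (\<Sum>v\<in>W. (x v)^2) \<ge> 0" using form_eig[OF g eq] form_sq[OF g, of x] by linarith
  moreover have "(\<Sum>v\<in>W. (x v)^2) > 0"
  proof -
    have "(x v1)^2 > 0" using v1 by simp
    moreover have "(x v1)^2 \<le> (\<Sum>v\<in>W. (x v)^2)" by (rule member_le_sum[OF v1(1)]) (auto simp: W)
    ultimately show ?thesis by linarith
  qed
  ultimately show ?thesis by (simp add: zero_le_mult_iff)
qed

context comp begin

lemma zero_QE_iff_bip: "QE C EC 0 \<longleftrightarrow> bipartite C EC"
proof
  assume "QE C EC 0"
  then obtain x v1 where v1: "v1 \<in> C" "x v1 \<noteq> 0" and eq: "\<forall>v\<in>C. Bx EC (Bt x) v = 0 * x v"
    unfolding QE_def by blast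
  have "(\<Sum>e\<in>EC. (Bt x e)^2) = 0" using form_eig[OF gC eq] form_sq[OF gC, of x] by simp
  hence "\<forall>e\<in>EC. Bt x e = 0" using sum_nonneg_eq_0_iff[OF sg_finite[OF gC], of "\<lambda>e. (Bt x e)^2"] by simp
  from this v1 show "bipartite C EC" by (rule bip_of_kernel)
next
  assume "bipartite C EC"
  then obtain f :: "'a \<Rightarrow> bool" where f: "\<forall>u\<in>C. \<forall>v\<in>C. {u,v} \<in> EC \<longrightarrow> f u \<noteq> f v" unfolding bipartite_def by blast
  define x where "x u = (if f u then 1 else -1::real)" for u
  have "\<forall>v\<in>C. Bx EC (Bt x) v = 0 * x v"
  proof
    fix v assume v: "v \<in> C"
    have "Bx EC (Bt x) v = (\<Sum>u\<in>nbrs EC v. Bt x {v,u})" unfolding Bx_def by (rule sum_edges_at[OF gC])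
    also have "\<dots> = 0"
    proof (rule sum.neutral, rule ballI)
      fix u assume u: "u \<in> nbrs EC v"
      hence uv: "{v,u} \<in> EC" unfolding nbrs_def by simp
      from sg_pair[OF gC uv] have "v \<noteq> u" "u \<in> C" by auto
      thus "Bt x {v,u} = 0" using f v uv unfolding Bt_def x_def by auto
    qed
    finally show "Bx EC (Bt x) v = 0 * x v" by simp
  qed
  moreover have "x v0 \<noteq> 0" unfolding x_def by simp
  ultimately show "QE C EC 0" unfolding QE_def using v0C by blast
qed

lemma count0_le1: "count (eigenvalues (signless_laplacian C EC)) 0 \<le> 1"
  unfolding sl_smat[OF finC]
proof (rule smat_zero_mult[OF finC _ _ v0C])
  show "\<And>u v. slf EC u v = slf EC v u" by (rule slf_sym)
  show "\<And>x. 0 \<le> fqf C (slf EC) x" using form_sq[OF gC] by (simp add: sum_nonneg)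
  fix x assume x0: "x v0 = 0" and f0: "fqf C (slf EC) x = 0"
  have "(\<Sum>e\<in>EC. (Bt x e)^2) = 0" using f0 form_sq[OF gC, of x] by simp
  hence "\<forall>e\<in>EC. Bt x e = 0" using sum_nonneg_eq_0_iff[OF sg_finite[OF gC], of "\<lambda>e. (Bt x e)^2"] by simp
  from this v0C x0 show "\<forall>v\<in>C. x v = 0" by (rule kernel_prop)
qed

lemma small_comp:
  assumes m: "card EC < 2" and q: "QE C EC \<mu>"
  shows "\<mu> = 0 \<or> \<mu> = 2"
proof (rule ccontr)
  assume nz: "\<not> (\<mu> = 0 \<or> \<mu> = 2)"
  obtain y v1 where v1: "v1 \<in> C" "y v1 \<noteq> 0" and eq: "\<forall>v\<in>C. Bx EC (Bt y) v = \<mu> * y v"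
    using q unfolding QE_def by blast
  have fE: "finite EC" by (rule sg_finite[OF gC])
  show False
  proof (cases "EC = {}")
    case True
    hence "Bx EC (Bt y) v1 = 0" unfolding Bx_def by simp
    thus False using eq v1 nz by simp
  next
    case False
    then obtain e where e: "e \<in> EC" by auto
    have "card EC = 1" using m False fE by (simp add: card_gt_0_iff less_2_cases_iff)
    then obtain z where "EC = {z}" by (rule card_1_singletonE)
    hence EC1: "EC = {e}" using e by simp
    obtain a b where ab: "a \<noteq> b" "e = {a,b}" "a \<in> C" "b \<in> C" using sg_edge[OF gC e] by blast
    have Bte: "Bt y e = y a + y b" using ab by (simp add: Bt_def)
    have Bxv: "Bx EC (Bt y) v = (if v \<in> e then y a + y b else 0)" for v
    proof (cases "v \<in> e")
      case True hence "{e'\<in>EC. v\<in>e'} = {e}" using EC1 by auto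
      thus ?thesis using True Bte unfolding Bx_def by simp
    next
      case False hence emp: "{e'\<in>EC. v\<in>e'} = {}" using EC1 by auto
      show ?thesis using False unfolding Bx_def emp by simp
    qed
    have out: "y v = 0" if "v \<in> C" "v \<notin> e" for v
      using eq that Bxv[of v] nz by auto
    have ya: "\<mu> * y a = y a + y b" using eq ab Bxv[of a] by auto
    have yb: "\<mu> * y b = y a + y b" using eq ab Bxv[of b] by auto
    have "\<mu> * y a = \<mu> * y b" using ya yb by simp
    hence "y a = y b" using nz by simp
    hence "(\<mu> - 2) * y a = 0" using ya by (simp add: algebra_simps)
    hence "y a = 0" using nz by simp
    hence "y b = 0" using \<open>y a = y b\<close> by simp
    have "y v1 = 0"
    proof (cases "v1 \<in> e")
      case True thus ?thesis using ab \<open>y a = 0\<close> \<open>y b = 0\<close> by auto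
    next
      case False thus ?thesis using out v1 by auto
    qed
    thus False using v1 by simp
  qed
qed

end

lemma QE_comp:
  assumes g: "simple_graph V E" and mu: "0 < \<mu>" "\<mu> < 2"
  shows "QE V E \<mu> \<longleftrightarrow> (\<exists>C. is_component V E C \<and> card (induced_edges E C) \<ge> 2 \<and> QE C (induced_edges E C) \<mu>)"
proof
  assume "QE V E \<mu>"
  then obtain y v1 where v1: "v1 \<in> V" "y v1 \<noteq> 0" and eq: "\<forall>v\<in>V. Bx E (Bt y) v = \<mu> * y v"
    unfolding QE_def by blast
  define C where "C = {u\<in>V. (adjacent E)\<^sup>*\<^sup>* v1 u}"
  interpret comp V E v1 C by (unfold_locales, rule g, rule v1(1), rule C_def)
  have "QE C EC \<mu>" unfolding QE_def
  proof (intro exI conjI)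
    show "\<exists>v\<in>C. y v \<noteq> 0" using v0C v1 by blast
    show "\<forall>v\<in>C. Bx EC (Bt y) v = \<mu> * y v" using eq Bx_C CV by auto
  qed
  moreover have "card EC \<ge> 2"
  proof (rule ccontr)
    assume "\<not> ?thesis" hence "card EC < 2" by simp
    from small_comp[OF this \<open>QE C EC \<mu>\<close>] mu show False by simp
  qed
  moreover have "is_component V E C" unfolding is_component_def C_def using v1 by blast
  ultimately show "\<exists>C. is_component V E C \<and> card (induced_edges E C) \<ge> 2 \<and> QE C (induced_edges E C) \<mu>" by blast
next
  assume "\<exists>C. is_component V E C \<and> card (induced_edges E C) \<ge> 2 \<and> QE C (induced_edges E C) \<mu>"
  then obtain C where ic: "is_component V E C" and q: "QE C (induced_edges E C) \<mu>" by blast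
  from ic obtain v1 where v1: "v1 \<in> V" "C = {u\<in>V. (adjacent E)\<^sup>*\<^sup>* v1 u}" unfolding is_component_def by blast
  interpret comp V E v1 C by (unfold_locales, rule g, rule v1(1), rule v1(2))
  obtain y w where w: "w \<in> C" "y w \<noteq> 0" and eq: "\<forall>v\<in>C. Bx EC (Bt y) v = \<mu> * y v"
    using q unfolding QE_def by blast
  define y' where "y' v = (if v \<in> C then y v else 0)" for v
  have "\<forall>v\<in>V. Bx E (Bt y') v = \<mu> * y' v"
  proof
    fix v assume v: "v \<in> V"
    show "Bx E (Bt y') v = \<mu> * y' v"
    proof (cases "v \<in> C")
      case True
      have "Bx E (Bt y') v = Bx EC (Bt y') v" using Bx_C[OF True] by simp
      also have "\<dots> = Bx EC (Bt y) v" unfolding Bx_def Bt_def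
      proof (intro sum.cong refl)
        fix e x assume "e \<in> {e\<in>EC. v\<in>e}" "x \<in> e"
        hence "x \<in> C" unfolding induced_edges_def by auto
        thus "y' x = y x" unfolding y'_def by simp
      qed
      also have "\<dots> = \<mu> * y' v" using eq True unfolding y'_def by simp
      finally show ?thesis .
    next
      case False
      have "Bx E (Bt y') v = 0" unfolding Bx_def
      proof (rule sum.neutral, rule ballI)
        fix e assume e: "e \<in> {e\<in>E. v\<in>e}"
        hence "e \<inter> C = {}" using c2'[OF False] by auto
        thus "Bt y' e = 0" unfolding Bt_def y'_def by (intro sum.neutral) auto
      qed
      thus ?thesis using False unfolding y'_def by simp
    qed
  qed
  moreover have "w \<in> V" "y' w \<noteq> 0" using w CV unfolding y'_def by auto
  ultimately show "QE V E \<mu>" unfolding QE_def by blast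
qed

lemma sorted_hd_ge:
  fixes xs :: "real list"
  assumes s: "sorted xs" and ne: "xs \<noteq> []"
  shows "(xs ! 0 \<ge> c) \<longleftrightarrow> (\<forall>a\<in>set xs. a \<ge> c)"
proof
  assume h: "xs ! 0 \<ge> c"
  show "\<forall>a\<in>set xs. a \<ge> c"
  proof
    fix a assume "a \<in> set xs"
    then obtain j where j: "j < length xs" "a = xs ! j" by (auto simp: in_set_conv_nth)
    have "xs ! 0 \<le> xs ! j" using s j by (simp add: sorted_iff_nth_mono)
    thus "a \<ge> c" using h j by simp
  qed
next
  assume "\<forall>a\<in>set xs. a \<ge> c"
  thus "xs ! 0 \<ge> c" using ne by simp
qed

lemma sorted_second_ge:
  fixes xs :: "real list"
  assumes s: "sorted xs" and l: "length xs \<ge> 2" and x0: "xs ! 0 = 0"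
  shows "(xs ! 1 \<ge> c) \<longleftrightarrow> (\<forall>a\<in>#mset xs - {#0#}. a \<ge> c)"
proof -
  obtain z zs where xs: "xs = z # zs" using l by (cases xs) auto
  have z: "z = 0" using x0 xs by simp
  have "mset xs - {#0#} = mset zs" using xs z by simp
  moreover have "sorted zs" using s xs by simp
  moreover have "zs \<noteq> []" using l xs by auto
  ultimately show ?thesis using sorted_hd_ge[of zs c] xs by simp
qed

context comp begin

abbreviation "M \<equiv> eigenvalues (signless_laplacian C EC)"

lemma M_iff: "(\<mu> \<in># M) = QE C EC \<mu>" by (rule Q_eig[OF gC])

lemma M_nonneg: "\<mu> \<in># M \<Longrightarrow> \<mu> \<ge> 0" using M_iff QE_nonneg[OF gC] by blast

lemma M_spec:
  "size M = card C"
  "sum_mset M = 2 * real (card EC)"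
  "sum_mset (image_mset (\<lambda>a. a^2) M) = (\<Sum>v\<in>C. real (degree EC v)^2) + 2 * real (card EC)"
proof -
  note sp = smat_spec[OF finC, of "slf EC", OF slf_sym]
  show "size M = card C" using sp(1) sl_smat[OF finC] by simp
  have "(\<Sum>v\<in>C. slf EC v v) = (\<Sum>v\<in>C. real (degree EC v))"
    by (intro sum.cong refl) (simp add: slf_def sg_noloop[OF gC, simplified])
  also have "\<dots> = 2 * real (card EC)" by (rule handshake[OF gC])
  finally show "sum_mset M = 2 * real (card EC)" using sp(2) sl_smat[OF finC] by simp
  have row: "(\<Sum>u\<in>C. (slf EC v u)^2) = real (degree EC v)^2 + real (degree EC v)" if v: "v \<in> C" for v
  proof -
    have nb: "nbrs EC v \<subseteq> C - {v}" by (rule nbrs_sub[OF gC])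
    have "(\<Sum>u\<in>C. (slf EC v u)^2) = (\<Sum>u\<in>C. (if v = u then real (degree EC v)^2 else 0) + (if u \<in> nbrs EC v then 1 else 0))"
    proof (intro sum.cong refl)
      fix u assume "u \<in> C"
      show "(slf EC v u)^2 = (if v = u then real (degree EC v)^2 else 0) + (if u \<in> nbrs EC v then 1 else 0)"
        using sg_noloop[OF gC, of v] unfolding slf_def nbrs_def by auto
    qed
    also have "\<dots> = real (degree EC v)^2 + (\<Sum>u\<in>C. if u \<in> nbrs EC v then 1 else 0)"
      using v finC by (simp add: sum.distrib)
    also have "(\<Sum>u\<in>C. if u \<in> nbrs EC v then 1 else (0::real)) = real (card (nbrs EC v))"
      using nb finC by (simp add: sum.If_cases Int_absorb1 Int_commute) (metis Diff_subset Int_absorb1 inf.absorb_iff2 inf_commute subset_trans)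
    finally show ?thesis using degree_nbrs[OF gC] by simp
  qed
  have "(\<Sum>v\<in>C. \<Sum>u\<in>C. (slf EC v u)^2) = (\<Sum>v\<in>C. real (degree EC v)^2 + real (degree EC v))"
    using row by simp
  also have "\<dots> = (\<Sum>v\<in>C. real (degree EC v)^2) + 2 * real (card EC)"
    using handshake[OF gC] by (simp add: sum.distrib)
  finally show "sum_mset (image_mset (\<lambda>a. a^2) M) = (\<Sum>v\<in>C. real (degree EC v)^2) + 2 * real (card EC)"
    using sp(3) sl_smat[OF finC] by simp
qed

end

lemma sq_sum_le:
  fixes M :: "real multiset"
  assumes "\<forall>t\<in>#M. t \<ge> 0"
  shows "sum_mset (image_mset (\<lambda>t. t^2) M) \<le> (sum_mset M)^2 \<and> sum_mset M \<ge> 0"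
  using assms
proof (induct M)
  case (add x M)
  hence x: "x \<ge> 0" and IH: "sum_mset (image_mset (\<lambda>t. t^2) M) \<le> (sum_mset M)^2" "sum_mset M \<ge> 0" by auto
  define S where "S = sum_mset M"
  have e: "(x + S)^2 = x^2 + 2 * x * S + S^2" by (simp add: power2_eq_square algebra_simps)
  have "0 \<le> 2 * x * S" using x IH(2) unfolding S_def by (intro mult_nonneg_nonneg) simp_all
  hence "x^2 + S^2 \<le> (x + S)^2" unfolding e by linarith
  hence "x^2 + (sum_mset M)^2 \<le> (x + sum_mset M)^2" unfolding S_def .
  thus ?case using IH x by simp
qed simp

lemma arith_bound:
  fixes M :: "real multiset"
  assumes ge: "\<forall>a\<in>#M. a \<ge> 2"
  shows "sum_mset M \<ge> 2 * real (size M) \<and>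
    sum_mset (image_mset (\<lambda>a. a^2) M) \<le> 4 * real (size M) + 4 * (sum_mset M - 2 * real (size M)) + (sum_mset M - 2 * real (size M))^2"
proof -
  let ?T = "image_mset (\<lambda>a. a - 2) M"
  have T: "\<forall>t\<in>#?T. t \<ge> 0" using ge by auto
  from sq_sum_le[OF T] have st: "sum_mset (image_mset (\<lambda>t. t^2) ?T) \<le> (sum_mset ?T)^2" "sum_mset ?T \<ge> 0" by auto
  have sT: "sum_mset ?T = sum_mset M - 2 * real (size M)" by (induct M) (auto simp: algebra_simps)
  have sq: "sum_mset (image_mset (\<lambda>a. a^2) M) = sum_mset (image_mset (\<lambda>t. t^2) ?T) + 4 * sum_mset ?T + 4 * real (size M)"
    by (induct M) (auto simp: algebra_simps power2_eq_square)
  show ?thesis using st sT sq by simp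
qed

lemma degsum_le1:
  fixes d :: "'a \<Rightarrow> nat"
  assumes fin: "finite C" and le: "(\<Sum>v\<in>C. real (d v)^2) \<le> (\<Sum>v\<in>C. real (d v))"
  shows "\<forall>v\<in>C. d v \<le> 1"
proof -
  have nn: "\<forall>v\<in>C. real (d v)^2 - real (d v) \<ge> 0"
  proof
    fix v assume "v \<in> C"
    have "real (d v) \<le> real (d v)^2"
    proof (cases "d v = 0")
      case False
      hence "1 \<le> real (d v)" by simp
      from mult_right_mono[OF this, of "real (d v)"] show ?thesis by (simp add: power2_eq_square)
    qed simp
    thus "real (d v)^2 - real (d v) \<ge> 0" by simp
  qed
  have "(\<Sum>v\<in>C. real (d v)^2 - real (d v)) \<le> 0" using le by (simp add: sum_subtractf)
  moreover have "(\<Sum>v\<in>C. real (d v)^2 - real (d v)) \<ge> 0" using nn by (simp add: sum_nonneg)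
  ultimately have z: "(\<Sum>v\<in>C. real (d v)^2 - real (d v)) = 0" by simp
  have "(\<Sum>v\<in>C. real (d v)^2 - real (d v)) = 0 \<longleftrightarrow> (\<forall>v\<in>C. real (d v)^2 - real (d v) = 0)"
    by (rule sum_nonneg_eq_0_iff[OF fin]) (use nn in blast)
  hence "\<forall>v\<in>C. real (d v)^2 - real (d v) = 0" using z by blast
  thus ?thesis
  proof (intro ballI)
    fix v assume "\<forall>v\<in>C. real (d v)^2 - real (d v) = 0" "v \<in> C"
    hence "real (d v) * (real (d v) - 1) = 0" by (simp add: power2_eq_square algebra_simps)
    hence "d v = 0 \<or> d v = 1" by simp
    thus "d v \<le> 1" by linarith
  qed
qed

context comp begin

lemma deg_le: "v \<in> C \<Longrightarrow> degree EC v \<le> card C - 1"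
proof -
  assume v: "v \<in> C"
  have "degree EC v = card (nbrs EC v)" by (rule degree_nbrs[OF gC])
  also have "\<dots> \<le> card (C - {v})" by (rule card_mono) (use finC nbrs_sub[OF gC] in auto)
  also have "\<dots> = card C - 1" using v finC by simp
  finally show ?thesis .
qed

lemma nonbip_noEig:
  assumes nb: "\<not> bipartite C EC"
  shows "(\<not> (\<exists>\<mu>. 0 < \<mu> \<and> \<mu> < 2 \<and> QE C EC \<mu>)) \<longleftrightarrow> (\<forall>a\<in>#M. a \<ge> 2)"
proof -
  have "0 \<notin># M" using M_iff zero_QE_iff_bip nb by simp
  hence pos: "\<forall>a\<in>#M. a > 0" using M_nonneg by (metis less_eq_real_def)
  show ?thesis
  proof
    assume h: "\<not> (\<exists>\<mu>. 0 < \<mu> \<and> \<mu> < 2 \<and> QE C EC \<mu>)"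
    show "\<forall>a\<in>#M. a \<ge> 2"
    proof
      fix a assume a: "a \<in># M"
      hence "QE C EC a" "a > 0" using M_iff pos by auto
      thus "a \<ge> 2" using h by (meson not_less)
    qed
  next
    assume h: "\<forall>a\<in>#M. a \<ge> 2"
    show "\<not> (\<exists>\<mu>. 0 < \<mu> \<and> \<mu> < 2 \<and> QE C EC \<mu>)"
    proof
      assume "\<exists>\<mu>. 0 < \<mu> \<and> \<mu> < 2 \<and> QE C EC \<mu>"
      then obtain \<mu> where "\<mu> < 2" "QE C EC \<mu>" by blast
      moreover have "\<mu> \<in># M" using M_iff \<open>QE C EC \<mu>\<close> by simp
      ultimately show False using h by fastforce
    qed
  qed
qed

lemma A1:
  assumes ge: "\<forall>a\<in>#M. a \<ge> 2" and m2: "card EC \<ge> 2"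
  shows "card EC > card C"
proof (rule ccontr)
  assume "\<not> ?thesis" hence mn: "card EC \<le> card C" by simp
  have b: "2 * real (card EC) \<ge> 2 * real (card C)"
       "(\<Sum>v\<in>C. real (degree EC v)^2) + 2 * real (card EC) \<le> 4 * real (card C) + 4 * (2 * real (card EC) - 2 * real (card C)) + (2 * real (card EC) - 2 * real (card C))^2"
    using arith_bound[OF ge] unfolding M_spec by auto
  have eq: "card EC = card C" using b(1) mn by simp
  hence "(\<Sum>v\<in>C. real (degree EC v)^2) \<le> 2 * real (card EC)" using b(2) by simp
  hence "(\<Sum>v\<in>C. real (degree EC v)^2) \<le> (\<Sum>v\<in>C. real (degree EC v))" using handshake[OF gC] by simp
  from degsum_le1[OF finC this] deg_le1_false m2 show False by blast
qed

end

lemma nonneg_sum0: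
  fixes f :: "'a \<Rightarrow> real"
  assumes fin: "finite C" and nn: "\<forall>v\<in>C. f v \<ge> 0" and s: "(\<Sum>v\<in>C. f v) \<le> 0"
  shows "\<forall>v\<in>C. f v = 0"
proof -
  have "(\<Sum>v\<in>C. f v) \<ge> 0" using nn by (simp add: sum_nonneg)
  hence z: "(\<Sum>v\<in>C. f v) = 0" using s by simp
  have "(\<Sum>v\<in>C. f v) = 0 \<longleftrightarrow> (\<forall>v\<in>C. f v = 0)"
    by (rule sum_nonneg_eq_0_iff[OF fin]) (use nn in blast)
  thus ?thesis using z by blast
qed

lemma C4_noEig:
  assumes c4: "is_C4 W F" and mu: "0 < \<mu>" "\<mu> < 2" and q: "QE W F \<mu>"
  shows False
proof -
  obtain a b c d where dist: "distinct [a,b,c,d]" and W: "W = {a,b,c,d}"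
    and F: "F = {{a,b},{b,c},{c,d},{d,a}}" using c4 unfolding is_C4_def by blast
  obtain y v1 where v1: "v1 \<in> W" "y v1 \<noteq> 0" and eq: "\<forall>v\<in>W. Bx F (Bt y) v = \<mu> * y v"
    using q unfolding QE_def by blast
  have bt: "Bt y {u,w} = y u + y w" if "u \<noteq> w" for u w using that by (simp add: Bt_def)
  have Fa: "{e\<in>F. a\<in>e} = {{a,b},{d,a}}" using dist unfolding F by (auto simp: doubleton_eq_iff)
  have Fb: "{e\<in>F. b\<in>e} = {{a,b},{b,c}}" using dist unfolding F by (auto simp: doubleton_eq_iff)
  have Fc: "{e\<in>F. c\<in>e} = {{b,c},{c,d}}" using dist unfolding F by (auto simp: doubleton_eq_iff)
  have Fd: "{e\<in>F. d\<in>e} = {{c,d},{d,a}}" using dist unfolding F by (auto simp: doubleton_eq_iff)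
  have e1: "\<mu> * y a = 2 * y a + y b + y d"
  proof -
    have "Bx F (Bt y) a = Bt y {a,b} + Bt y {d,a}" unfolding Bx_def Fa using dist by (subst sum.insert) (auto simp: doubleton_eq_iff)
    moreover have "Bt y {a,b} = y a + y b" using dist by (intro bt) auto
    moreover have "Bt y {d,a} = y d + y a" using dist by (intro bt) auto
    moreover have "Bx F (Bt y) a = \<mu> * y a" using eq W by auto
    ultimately show ?thesis by linarith
  qed
  have e2: "\<mu> * y b = 2 * y b + y a + y c"
  proof -
    have "Bx F (Bt y) b = Bt y {a,b} + Bt y {b,c}" unfolding Bx_def Fb using dist by (subst sum.insert) (auto simp: doubleton_eq_iff)
    moreover have "Bt y {a,b} = y a + y b" using dist by (intro bt) auto
    moreover have "Bt y {b,c} = y b + y c" using dist by (intro bt) auto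
    moreover have "Bx F (Bt y) b = \<mu> * y b" using eq W by auto
    ultimately show ?thesis by linarith
  qed
  have e3: "\<mu> * y c = 2 * y c + y b + y d"
  proof -
    have "Bx F (Bt y) c = Bt y {b,c} + Bt y {c,d}" unfolding Bx_def Fc using dist by (subst sum.insert) (auto simp: doubleton_eq_iff)
    moreover have "Bt y {b,c} = y b + y c" using dist by (intro bt) auto
    moreover have "Bt y {c,d} = y c + y d" using dist by (intro bt) auto
    moreover have "Bx F (Bt y) c = \<mu> * y c" using eq W by auto
    ultimately show ?thesis by linarith
  qed
  have e4: "\<mu> * y d = 2 * y d + y c + y a"
  proof -
    have "Bx F (Bt y) d = Bt y {c,d} + Bt y {d,a}" unfolding Bx_def Fd using dist by (subst sum.insert) (auto simp: doubleton_eq_iff)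
    moreover have "Bt y {c,d} = y c + y d" using dist by (intro bt) auto
    moreover have "Bt y {d,a} = y d + y a" using dist by (intro bt) auto
    moreover have "Bx F (Bt y) d = \<mu> * y d" using eq W by auto
    ultimately show ?thesis by linarith
  qed
  have m2: "\<mu> - 2 \<noteq> 0" using mu by simp
  have "(\<mu> - 2) * (y a - y c) = \<mu> * y a - \<mu> * y c - 2 * y a + 2 * y c" by (simp add: algebra_simps)
  also have "\<dots> = 0" using e1 e3 by linarith
  finally have ac: "y a = y c" using m2 by simp
  have "(\<mu> - 2) * (y b - y d) = \<mu> * y b - \<mu> * y d - 2 * y b + 2 * y d" by (simp add: algebra_simps)
  also have "\<dots> = 0" using e2 e4 by linarith
  finally have bd: "y b = y d" using m2 by simp
  have f1: "(\<mu> - 2) * y a = 2 * y b"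
  proof -
    have "(\<mu> - 2) * y a = \<mu> * y a - 2 * y a" by (simp add: algebra_simps)
    thus ?thesis using e1 bd by linarith
  qed
  have f2: "(\<mu> - 2) * y b = 2 * y a"
  proof -
    have "(\<mu> - 2) * y b = \<mu> * y b - 2 * y b" by (simp add: algebra_simps)
    thus ?thesis using e2 ac by linarith
  qed
  have "(\<mu> - 2) * ((\<mu> - 2) * y a) = 4 * y a" unfolding f1 using f2 by (simp add: algebra_simps)
  hence "(\<mu> * (\<mu> - 4)) * y a = 0" by (simp add: algebra_simps)
  moreover have "\<mu> * (\<mu> - 4) \<noteq> 0" using mu by simp
  ultimately have ya: "y a = 0" by simp
  hence yb: "y b = 0" using f1 by simp
  have "y v1 = 0" using v1 W ya yb ac bd by auto
  thus False using v1 by simp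
qed

context comp begin

lemma nb_sym: "u \<in> nbrs EC v \<longleftrightarrow> v \<in> nbrs EC u"
  unfolding nbrs_def by (simp add: insert_commute)

lemma nbC: "v \<in> C \<Longrightarrow> nbrs EC v \<subseteq> C - {v}" using nbrs_sub[OF gC] .

lemma finnb: "finite (nbrs EC v)"
proof -
  have "nbrs EC v \<subseteq> C" using nbrs_sub[OF gC] by auto
  thus ?thesis using finC finite_subset by blast
qed

lemma nb_edge: "u \<in> nbrs EC v \<Longrightarrow> {v,u} \<in> EC" unfolding nbrs_def by simp

lemma triangle_false:
  assumes n3: "card C = 3" and d2: "\<forall>v\<in>C. degree EC v = 2" and bip: "bipartite C EC"
  shows False
proof -
  have full: "nbrs EC v = C - {v}" if v: "v \<in> C" for v
  proof (rule card_subset_eq)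
    show "finite (C - {v})" using finC by simp
    show "nbrs EC v \<subseteq> C - {v}" using nbC[OF v] .
    show "card (nbrs EC v) = card (C - {v})" using d2 v degree_nbrs[OF gC, of v] n3 finC by simp
  qed
  obtain a b c where abc: "C = {a,b,c}" "a \<noteq> b" "b \<noteq> c" "a \<noteq> c" using n3 card_3_iff by metis
  have "{a,b} \<in> EC" "{b,c} \<in> EC" "{a,c} \<in> EC"
    using nb_edge full abc by auto
  moreover obtain f :: "'a \<Rightarrow> bool" where f: "\<forall>u\<in>C. \<forall>v\<in>C. {u,v} \<in> EC \<longrightarrow> f u \<noteq> f v"
    using bip unfolding bipartite_def by blast
  ultimately have "f a \<noteq> f b" "f b \<noteq> f c" "f a \<noteq> f c" using abc by auto
  thus False by auto
qed

lemma C4_build: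
  assumes n4: "card C = 4" and d2: "\<forall>v\<in>C. degree EC v = 2" and m4: "card EC = 4"
  shows "is_C4 C EC"
proof -
  have c2: "card (nbrs EC v) = 2" if "v \<in> C" for v using d2 that degree_nbrs[OF gC, of v] by simp
  have aC: "v0 \<in> C" by (rule v0C)
  define a where "a = v0"
  have aC: "a \<in> C" using v0C a_def by simp
  obtain b d where bd: "b \<noteq> d" "nbrs EC a = {b,d}" using c2[OF aC] card_2_iff by metis
  have bC: "b \<in> C" "b \<noteq> a" and dC: "d \<in> C" "d \<noteq> a" using nbC[OF aC] bd by auto
  have "a \<in> nbrs EC b" using nb_sym bd by auto
  moreover obtain p q where pq: "p \<noteq> q" "nbrs EC b = {p,q}" using c2[OF bC(1)] card_2_iff by metis
  ultimately obtain c where c: "nbrs EC b = {a,c}" "c \<noteq> a"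
    by (metis insert_commute insertE singletonD)
  have cC: "c \<in> C" "c \<noteq> b" using nbC[OF bC(1)] c by auto
  have cd: "c \<noteq> d"
  proof
    assume cd: "c = d"
    have "{a,b} \<subseteq> nbrs EC d" using nb_sym bd c cd by auto
    moreover have "card {a,b} = card (nbrs EC d)" using c2[OF dC(1)] bC by simp
    ultimately have nd: "nbrs EC d = {a,b}" using finnb card_subset_eq by metis
    have "card {a,b,d} = 3" using bC dC bd by simp
    hence "{a,b,d} \<noteq> C" using n4 by auto
    moreover have "{a,b,d} \<subseteq> C" using aC bC dC by auto
    ultimately obtain w where w: "w \<in> C" "w \<notin> {a,b,d}" by blast
    have Cw: "C = {a,b,d,w}"
    proof (rule sym, rule card_subset_eq[OF finC])
      show "{a,b,d,w} \<subseteq> C" using aC bC dC w by auto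
      have "distinct [a,b,d,w]" using bC dC bd w by auto
      from distinct_card[OF this] show "card {a,b,d,w} = card C" using n4 by simp
    qed
    have "nbrs EC w \<noteq> {}" using c2[OF w(1)] by auto
    then obtain u where u: "u \<in> nbrs EC w" by auto
    hence "w \<in> nbrs EC u" using nb_sym by simp
    moreover have "u \<in> C - {w}" using nbC[OF w(1)] u by auto
    hence "u \<in> {a,b,d}" using Cw by auto
    ultimately show False using bd c cd nd w by auto
  qed
  have dist: "distinct [a,b,c,d]" using bC dC cC c cd bd by auto
  have Cabcd: "C = {a,b,c,d}"
  proof (rule sym, rule card_subset_eq[OF finC])
    show "{a,b,c,d} \<subseteq> C" using aC bC cC dC by auto
    show "card {a,b,c,d} = card C" using n4 dist by simp
  qed
  have "b \<in> nbrs EC c" using nb_sym c by auto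
  moreover have "a \<notin> nbrs EC c" using nb_sym bd cC cd by auto
  moreover have "nbrs EC c \<subseteq> {a,b,d}" using nbC[OF cC(1)] Cabcd by auto
  ultimately have "nbrs EC c \<subseteq> {b,d}" by auto
  moreover have "card {b,d} = card (nbrs EC c)" using c2[OF cC(1)] bd by simp
  ultimately have nc: "nbrs EC c = {b,d}" by (metis card_subset_eq finite.emptyI finite_insert)
  have E4: "{{a,b},{b,c},{c,d},{d,a}} \<subseteq> EC"
    using nb_edge[of b a] nb_edge[of c b] nb_edge[of d c] nb_edge[of d a] bd c nc
    by (auto simp: insert_commute)
  have "distinct [{a,b},{b,c},{c,d},{d,a}]" using dist by (auto simp: doubleton_eq_iff)
  from distinct_card[OF this] have "card {{a,b},{b,c},{c,d},{d,a}} = 4" by simp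
  hence "{{a,b},{b,c},{c,d},{d,a}} = EC" using m4 E4 card_subset_eq[OF sg_finite[OF gC] E4] by simp
  thus ?thesis unfolding is_C4_def using dist Cabcd by blast
qed


lemma bip_facts:
  assumes bip: "bipartite C EC"
  shows "0 \<in># M" "M = add_mset 0 (M - {#0#})" "0 \<notin># M - {#0#}"
proof -
  show z: "0 \<in># M" using M_iff zero_QE_iff_bip bip by simp
  show "M = add_mset 0 (M - {#0#})" using z by simp
  have "count M 0 \<le> 1" by (rule count0_le1)
  hence "count (M - {#0#}) 0 = 0" by simp
  thus "0 \<notin># M - {#0#}" by (simp add: not_in_iff)
qed

lemma bip_noEig:
  assumes bip: "bipartite C EC"
  shows "(\<not> (\<exists>\<mu>. 0 < \<mu> \<and> \<mu> < 2 \<and> QE C EC \<mu>)) \<longleftrightarrow> (\<forall>a\<in>#M - {#0#}. a \<ge> 2)"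
proof
  assume h: "\<not> (\<exists>\<mu>. 0 < \<mu> \<and> \<mu> < 2 \<and> QE C EC \<mu>)"
  show "\<forall>a\<in>#M - {#0#}. a \<ge> 2"
  proof
    fix a assume a: "a \<in># M - {#0#}"
    hence aM: "a \<in># M" by (rule in_diffD)
    have "a \<noteq> 0" using a bip_facts(3)[OF bip] by auto
    hence "a > 0" using M_nonneg[OF aM] by simp
    moreover have "QE C EC a" using M_iff aM by simp
    ultimately show "a \<ge> 2" using h by (meson not_less)
  qed
next
  assume h: "\<forall>a\<in>#M - {#0#}. a \<ge> 2"
  show "\<not> (\<exists>\<mu>. 0 < \<mu> \<and> \<mu> < 2 \<and> QE C EC \<mu>)"
  proof
    assume "\<exists>\<mu>. 0 < \<mu> \<and> \<mu> < 2 \<and> QE C EC \<mu>"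
    then obtain \<mu> where mu: "0 < \<mu>" "\<mu> < 2" "QE C EC \<mu>" by blast
    hence "\<mu> \<in># M" using M_iff by simp
    hence "\<mu> \<in># M - {#0#}" using mu(1) by (simp add: in_diff_count)
    thus False using h mu(2) by fastforce
  qed
qed

lemma A2:
  assumes bip: "bipartite C EC" and ge: "\<forall>a\<in>#M - {#0#}. a \<ge> 2" and m2: "card EC \<ge> 2"
  shows "is_C4 C EC \<or> card EC > card C"
proof (rule ccontr)
  assume "\<not> ?thesis"
  hence nc4: "\<not> is_C4 C EC" and mn: "card EC \<le> card C" by auto
  obtain M' where M'd: "M' = M - {#0#}" by blast
  have MM: "M = add_mset 0 M'" using bip_facts(2)[OF bip] M'd by simp
  have ge': "\<forall>a\<in>#M'. a \<ge> 2" using ge M'd by simp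
  have "size M = Suc (size M')" using arg_cong[OF MM, of size] by simp
  hence sz: "real (size M') = real (card C) - 1" using M_spec(1) by simp
  have "sum_mset M = sum_mset M'" using arg_cong[OF MM, of sum_mset] by simp
  hence sm: "sum_mset M' = 2 * real (card EC)" using M_spec(2) by simp
  have "sum_mset (image_mset (\<lambda>a. a^2) M) = sum_mset (image_mset (\<lambda>a. a^2) M')"
    using arg_cong[OF MM, of "\<lambda>N. sum_mset (image_mset (\<lambda>a. a^2) N)"] by simp
  hence sq: "sum_mset (image_mset (\<lambda>a. a^2) M') = (\<Sum>v\<in>C. real (degree EC v)^2) + 2 * real (card EC)"
    using M_spec(3) by simp
  from arith_bound[OF ge'] sz sm sq have
    b1: "2 * real (card EC) \<ge> 2 * (real (card C) - 1)" and
    b2: "(\<Sum>v\<in>C. real (degree EC v)^2) + 2 * real (card EC) \<le> 4 * (real (card C) - 1)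
        + 4 * (2 * real (card EC) - 2 * (real (card C) - 1)) + (2 * real (card EC) - 2 * (real (card C) - 1))^2"
    by simp_all
  define D where "D = (\<Sum>v\<in>C. real (degree EC v)^2)"
  have hs: "(\<Sum>v\<in>C. real (degree EC v)) = 2 * real (card EC)" by (rule handshake[OF gC])
  have "real (card C) \<le> real (card EC + 1)" using b1 by simp
  hence "card C \<le> card EC + 1" by (simp only: of_nat_le_iff)
  hence "card EC + 1 = card C \<or> card EC = card C" using mn by linarith
  thus False
  proof
    assume e: "card EC + 1 = card C"
    hence "real (card C) - 1 = real (card EC)" by linarith
    hence "D + 2 * real (card EC) \<le> 4 * real (card EC)" using b2 unfolding D_def by simp
    hence "D \<le> (\<Sum>v\<in>C. real (degree EC v))" using hs by simp
    from degsum_le1[OF finC this[unfolded D_def]] deg_le1_false m2 show False by blast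
  next
    assume e: "card EC = card C"
    define n where "n = card C"
    have "2 * real (card EC) - 2 * (real (card C) - 1) = 2" using e by simp
    hence "D + 2 * real n \<le> 4 * (real n - 1) + 8 + 4" using b2 e unfolding D_def n_def by simp
    hence Dle: "D \<le> 2 * real n + 8" by simp
    have hs2: "(\<Sum>v\<in>C. real (degree EC v)) = 2 * real n" using hs e n_def by simp
    define h where "h v = (real (degree EC v) - 1) * (real (degree EC v) - 2)" for v
    have hnn: "\<forall>v\<in>C. h v \<ge> 0"
    proof
      fix v assume "v \<in> C"
      show "h v \<ge> 0"
      proof (cases "degree EC v \<le> 1")
        case True
        hence "real (degree EC v) - 1 \<le> 0" "real (degree EC v) - 2 \<le> 0" by auto
        thus ?thesis unfolding h_def by (rule mult_nonpos_nonpos)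
      next
        case False
        hence "real (degree EC v) - 1 \<ge> 0" "real (degree EC v) - 2 \<ge> 0" by auto
        thus ?thesis unfolding h_def by (rule mult_nonneg_nonneg)
      qed
    qed
    have hp: "h v = real (degree EC v)^2 - 3 * real (degree EC v) + 2" for v
      unfolding h_def by (simp add: algebra_simps power2_eq_square)
    have "(\<Sum>v\<in>C. h v) = (\<Sum>v\<in>C. real (degree EC v)^2 - 3 * real (degree EC v) + 2)"
      by (simp add: hp)
    also have "\<dots> = D - 3 * (\<Sum>v\<in>C. real (degree EC v)) + 2 * real n"
      unfolding D_def n_def by (simp add: sum.distrib sum_subtractf sum_distrib_left)
    finally have hsum: "(\<Sum>v\<in>C. h v) = D - 3 * (\<Sum>v\<in>C. real (degree EC v)) + 2 * real n" .
    hence hsum': "(\<Sum>v\<in>C. h v) \<le> 8 - 2 * real n" using Dle hs2 by simp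
    have "(\<Sum>v\<in>C. h v) \<ge> 0" using hnn by (simp add: sum_nonneg)
    hence n4: "n \<le> 4" using hsum' by simp
    have n3: "n \<ge> 3"
    proof (rule ccontr)
      assume "\<not> n \<ge> 3"
      hence "\<forall>v\<in>C. degree EC v \<le> 1" using deg_le n_def by fastforce
      thus False using deg_le1_false m2 by blast
    qed
    have dle2: "\<forall>v\<in>C. degree EC v \<le> 2" if "n \<le> 3" using deg_le n_def that by fastforce
    show False
    proof (cases "n = 3")
      case True
      have "\<forall>v\<in>C. 2 - real (degree EC v) = 0"
      proof (rule nonneg_sum0[OF finC])
        show "\<forall>v\<in>C. 2 - real (degree EC v) \<ge> 0" using dle2 True by auto
        have "(\<Sum>v\<in>C. 2 - real (degree EC v)) = 2 * real (card C) - 2 * real n" using hs2 by (simp add: sum_subtractf)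
        thus "(\<Sum>v\<in>C. 2 - real (degree EC v)) \<le> 0" using n_def by simp
      qed
      hence "\<forall>v\<in>C. degree EC v = 2" by auto
      thus False using triangle_false[OF _ _ bip] True n_def by simp
    next
      case False
      hence n4': "n = 4" using n3 n4 by simp
      have h0: "\<forall>v\<in>C. h v = 0" using nonneg_sum0[OF finC hnn] hsum' n4' by simp
      have dle2': "\<forall>v\<in>C. degree EC v \<le> 2"
      proof
        fix v assume v: "v \<in> C"
        have "h v = 0" using h0 v by simp
        hence "real (degree EC v) = 1 \<or> real (degree EC v) = 2" unfolding h_def by simp
        thus "degree EC v \<le> 2" by linarith
      qed
      have "\<forall>v\<in>C. 2 - real (degree EC v) = 0"
      proof (rule nonneg_sum0[OF finC])
        show "\<forall>v\<in>C. 2 - real (degree EC v) \<ge> 0" using dle2' by auto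
        have "(\<Sum>v\<in>C. 2 - real (degree EC v)) = 2 * real (card C) - 2 * real n" using hs2 by (simp add: sum_subtractf)
        thus "(\<Sum>v\<in>C. 2 - real (degree EC v)) \<le> 0" using n_def by simp
      qed
      hence "\<forall>v\<in>C. degree EC v = 2" by auto
      from C4_build[OF _ this] n4' n_def e nc4 show False by simp
    qed
  qed
qed

lemma n2: assumes m2: "card EC \<ge> 2" shows "card C \<ge> 2"
proof -
  have "EC \<noteq> {}" using m2 by auto
  then obtain e where e: "e \<in> EC" by auto
  obtain a b where ab: "a \<noteq> b" "e = {a,b}" "a \<in> C" "b \<in> C" using sg_edge[OF gC e] by blast
  have "card {a,b} \<le> card C" by (rule card_mono[OF finC]) (use ab in auto)
  thus ?thesis using ab by simp
qed

lemma comp_equiv: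
  assumes m2: "card EC \<ge> 2"
  shows "(\<not> (\<exists>\<mu>. 0 < \<mu> \<and> \<mu> < 2 \<and> QE C EC \<mu>)) \<longleftrightarrow>
    (let EC = induced_edges E C; nC = card C in
       (\<not> bipartite C EC \<longrightarrow> card EC > nC \<and> q_eig nC C EC \<ge> 2) \<and>
       (bipartite C EC \<longrightarrow> is_C4 C EC \<or> (card EC > nC \<and> q_eig (nC - 1) C EC \<ge> 2)))"
proof -
  define ys where "ys = sorted_list_of_multiset M"
  have ys: "mset ys = M" "sorted ys" using ys_def by auto
  have ly: "length ys = card C" using M_spec(1) ys(1) by (metis size_mset)
  have nn: "card C \<ge> 2" by (rule n2[OF m2])
  have q1: "q_eig (card C) C EC = ys ! 0"
    unfolding q_eig_def ys_def[symmetric] using nn ly by (simp add: rev_nth)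
  have q2: "q_eig (card C - 1) C EC = ys ! 1"
  proof -
    have "q_eig (card C - 1) C EC = rev ys ! (card C - 2)" unfolding q_eig_def ys_def[symmetric]
      by (simp add: numeral_2_eq_2)
    also have "\<dots> = ys ! 1" using nn ly by (simp add: rev_nth)
    finally show ?thesis .
  qed
  have ne: "ys \<noteq> []" using ly nn by auto
  have setys: "set ys = set_mset M" using ys(1) by (metis set_mset_mset)
  show ?thesis
  proof (cases "bipartite C EC")
    case False
    have "(\<not> (\<exists>\<mu>. 0 < \<mu> \<and> \<mu> < 2 \<and> QE C EC \<mu>)) \<longleftrightarrow> (\<forall>a\<in>#M. a \<ge> 2)"
      by (rule nonbip_noEig[OF False])
    also have "\<dots> \<longleftrightarrow> card EC > card C \<and> ys ! 0 \<ge> 2"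
      using A1[OF _ m2] sorted_hd_ge[OF ys(2) ne, of 2] setys by auto
    finally show ?thesis using False q1 by (simp add: Let_def)
  next
    case True
    have z: "0 \<in> set ys" using bip_facts(1)[OF True] setys by simp
    have y0: "ys ! 0 = 0"
    proof -
      have "ys ! 0 \<in> set_mset M" using ne setys by (metis nth_mem length_greater_0_conv)
      hence "ys ! 0 \<ge> 0" by (rule M_nonneg)
      moreover have "ys ! 0 \<le> 0" using sorted_hd_ge[OF ys(2) ne, of "ys ! 0"] z by auto
      ultimately show ?thesis by simp
    qed
    have "(\<not> (\<exists>\<mu>. 0 < \<mu> \<and> \<mu> < 2 \<and> QE C EC \<mu>)) \<longleftrightarrow> (\<forall>a\<in>#M - {#0#}. a \<ge> 2)"
      by (rule bip_noEig[OF True])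
    also have "\<dots> \<longleftrightarrow> is_C4 C EC \<or> (card EC > card C \<and> ys ! 1 \<ge> 2)"
    proof -
      have s2: "(ys ! 1 \<ge> 2) \<longleftrightarrow> (\<forall>a\<in>#M - {#0#}. a \<ge> 2)"
        using sorted_second_ge[OF ys(2) _ y0, of 2] ly nn ys(1) by simp
      show ?thesis
      proof
        assume h: "\<forall>a\<in>#M - {#0#}. a \<ge> 2"
        thus "is_C4 C EC \<or> (card EC > card C \<and> ys ! 1 \<ge> 2)" using A2[OF True h m2] s2 by auto
      next
        assume h: "is_C4 C EC \<or> (card EC > card C \<and> ys ! 1 \<ge> 2)"
        show "\<forall>a\<in>#M - {#0#}. a \<ge> 2"
        proof (cases "is_C4 C EC")
          case c4: True
          have "\<not> (\<exists>\<mu>. 0 < \<mu> \<and> \<mu> < 2 \<and> QE C EC \<mu>)" using C4_noEig[OF c4] by blast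
          thus ?thesis using bip_noEig[OF True] by simp
        next
          case False thus ?thesis using h s2 by simp
        qed
      qed
    qed
    finally show ?thesis using True q2 by (simp add: Let_def)
  qed
qed
end

theorem mainTheorem14:
  fixes V :: "'a set" and E :: "'a set set"
  assumes "simple_graph V E"
  shows "energy E (line_graph_edges E) \<le> 4 * real (neg_inertia E (line_graph_edges E))
    \<and> (energy E (line_graph_edges E) = 4 * real (neg_inertia E (line_graph_edges E))
       \<longleftrightarrow> (\<forall>C. is_component V E C \<and> card (induced_edges E C) \<ge> 2 \<longrightarrow>
             (let EC = induced_edges E C; nC = card C in
               (\<not> bipartite C EC \<longrightarrow> card EC > nC \<and> q_eig nC C EC \<ge> 2) \<and>
               (bipartite C EC \<longrightarrow> is_C4 C EC \<or> (card EC > nC \<and> q_eig (nC - 1) C EC \<ge> 2)))))"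
proof -
  have g: "simple_graph V E" by (rule assms)
  have F: "finite E" by (rule sg_finite[OF g])
  define LM where "LM = eigenvalues (adj_matrix E (line_graph_edges E))"
  have sum0: "sum_mset LM = 0"
  proof -
    have "sum_mset LM = (\<Sum>e\<in>E. lgf E e e)"
      unfolding LM_def lg_smat by (rule smat_spec(2)[OF F lgf_sym])
    also have "\<dots> = 0" by (intro sum.neutral ballI) (simp add: lgf_simp[OF g])
    finally show ?thesis .
  qed
  have ge: "\<forall>x\<in>#LM. x \<ge> -2"
  proof
    fix x assume "x \<in># LM"
    hence "LE E (x + 2)" using L_eig[OF g] unfolding LM_def by simp
    from LE_nonneg[OF g this] show "x \<ge> -2" by simp
  qed
  note en = energy_mset[OF sum0 ge]
  have en_def: "energy E (line_graph_edges E) = sum_mset (image_mset abs LM)"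
    "neg_inertia E (line_graph_edges E) = size (filter_mset (\<lambda>x. x < 0) LM)"
    unfolding energy_def neg_inertia_def LM_def by simp_all
  have step1: "(\<forall>x\<in>#LM. x < 0 \<longrightarrow> x = -2) \<longleftrightarrow> \<not> (\<exists>\<mu>. 0 < \<mu> \<and> \<mu> < 2 \<and> QE V E \<mu>)"
  proof
    assume h: "\<forall>x\<in>#LM. x < 0 \<longrightarrow> x = -2"
    show "\<not> (\<exists>\<mu>. 0 < \<mu> \<and> \<mu> < 2 \<and> QE V E \<mu>)"
    proof
      assume "\<exists>\<mu>. 0 < \<mu> \<and> \<mu> < 2 \<and> QE V E \<mu>"
      then obtain \<mu> where mu: "0 < \<mu>" "\<mu> < 2" "QE V E \<mu>" by blast
      hence "LE E \<mu>" using LE_QE[OF g] by simp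
      hence "(\<mu> - 2) \<in># LM" using L_eig[OF g, of "\<mu> - 2"] unfolding LM_def by simp
      thus False using h mu by fastforce
    qed
  next
    assume h: "\<not> (\<exists>\<mu>. 0 < \<mu> \<and> \<mu> < 2 \<and> QE V E \<mu>)"
    show "\<forall>x\<in>#LM. x < 0 \<longrightarrow> x = -2"
    proof (intro ballI impI)
      fix x assume x: "x \<in># LM" "x < 0"
      hence le: "LE E (x + 2)" using L_eig[OF g] unfolding LM_def by simp
      have "x \<ge> -2" using ge x by simp
      show "x = -2"
      proof (rule ccontr)
        assume "x \<noteq> -2"
        hence p: "0 < x + 2" "x + 2 < 2" using \<open>x \<ge> -2\<close> x by auto
        hence "QE V E (x + 2)" using LE_QE[OF g] le by simp
        thus False using h p by blast
      qed
    qed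
  qed
  have step2: "\<not> (\<exists>\<mu>. 0 < \<mu> \<and> \<mu> < 2 \<and> QE V E \<mu>) \<longleftrightarrow>
     (\<forall>C. is_component V E C \<and> card (induced_edges E C) \<ge> 2 \<longrightarrow>
        \<not> (\<exists>\<mu>. 0 < \<mu> \<and> \<mu> < 2 \<and> QE C (induced_edges E C) \<mu>))"
    using QE_comp[OF g] by blast
  have step3: "\<not> (\<exists>\<mu>. 0 < \<mu> \<and> \<mu> < 2 \<and> QE C (induced_edges E C) \<mu>) \<longleftrightarrow>
             (let EC = induced_edges E C; nC = card C in
               (\<not> bipartite C EC \<longrightarrow> card EC > nC \<and> q_eig nC C EC \<ge> 2) \<and>
               (bipartite C EC \<longrightarrow> is_C4 C EC \<or> (card EC > nC \<and> q_eig (nC - 1) C EC \<ge> 2)))"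
    if ic: "is_component V E C" and m2: "card (induced_edges E C) \<ge> 2" for C
  proof -
    from ic obtain v1 where v1: "v1 \<in> V" "C = {u\<in>V. (adjacent E)\<^sup>*\<^sup>* v1 u}" unfolding is_component_def by blast
    interpret comp V E v1 C by (unfold_locales, rule g, rule v1(1), rule v1(2))
    show ?thesis by (rule comp_equiv[OF m2])
  qed
  show ?thesis using en en_def step1 step2 step3 by auto
qed

end
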